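(* Let $m,d,L\ge2$ be integers and let $\mathcal{E}=\{\eta_1,\rho_1;\eta_2,\rho_2\}$ be the $m$-qudit ensemble with $\eta_1=\frac{2d^m}{d+3d^m}$, $\rho_1=\frac{1}{2d^m}(\mathbb{1}^m_d+d^m\Phi^m_d)$, $\eta_2=\frac{d+d^m}{d+3d^m}$, $\rho_2=\Phi^m_d$. Let $\mathcal{E}^1=\cdots=\mathcal{E}^L=\mathcal{E}$. Then $$\prod_{l=1}^Lp_{\sf L}(\mathcal{E}^l)=\eta_1^L<p_{\sf L}\Big(\bigotimes_{l=1}^L\mathcal{E}^l\Big),$$ so the optimal LOCC discrimination of $\bigotimes_{l=1}^L\mathcal{E}^l$ is not factorizable. In particular, $(\mathbb{1}^m_d-d\Phi^m_d)\otimes(\mathbb{1}^m_d+d^m\Phi^m_d)$ is not block positive with respect to the $m$ parties.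
   Context: $\mathbb{1}^m_d$ is the identity on $(\mathbb{C}^d)^{\otimes m}$ (parties $\mathsf{A}_1,\dots,\mathsf{A}_m$, each holding one $\mathbb{C}^d$) and $\Phi^m_d=\frac1d\sum_{i,j=0}^{d-1}|i\cdots i\rangle\langle j\cdots j|$ is the $m$-qudit GHZ state. For ensembles $\mathcal{E}^l=\{\eta^l_i,\rho^l_i\}_i$, the sequence ensemble $\bigotimes_l\mathcal{E}^l=\{\eta_{\vec c},\rho_{\vec c}\}_{\vec c}$ has $\eta_{\vec c}=\prod_l\eta^l_{c_l}$, $\rho_{\vec c}=\bigotimes_l\rho^l_{c_l}$, and is regarded as an $m$-party ensemble where party $\mathsf{A}_k$ holds the $k$-th qudit of every copy. An operator $E$ is block positive if $\operatorname{Tr}(E\sigma)\ge0$ for all states $\sigma$ separable across $\mathsf{A}_1,\dots,\mathsf{A}_m$. A measurement is LOCC if realizable by local operations and classical communication among the $m$ parties; for an ensemble $\{\eta_j,\rho_j\}_j$, $p_{\sf L}$ is the maximum of $\sum_j\eta_j\operatorname{Tr}(\rho_jM_j)$ over LOCC measurements $\{M_j\}_j$. Factorizable means $p_{\sf L}(\bigotimes_l\mathcal{E}^l)=\prod_lp_{\sf L}(\mathcal{E}^l)$. *)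

theory Defs
  imports Complex_Main
begin

text \<open>A system of parties 0..<length ns, party k holding C^(ns!k).  A basis index is a
list i with length i = length ns and i!k < ns!k.  Operators are matrices indexed by such
lists; they are required/constructed to vanish outside valid indices.\<close>

type_synonym op = "nat list \<Rightarrow> nat list \<Rightarrow> complex"

definition valid :: "nat list \<Rightarrow> nat list \<Rightarrow> bool" where
  "valid ns i \<longleftrightarrow> length i = length ns \<and> (\<forall>k<length ns. i ! k < ns ! k)"

definition idx :: "nat list \<Rightarrow> nat list set" where
  "idx ns = {i. valid ns i}"

definition idop :: "nat list \<Rightarrow> op" where
  "idop ns i j = (if valid ns i \<and> i = j then 1 else 0)"

definition zeroop :: op where
  "zeroop i j = 0"

definition tr :: "nat list \<Rightarrow> op \<Rightarrow> op \<Rightarrow> complex" where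
  "tr ns A B = (\<Sum>i\<in>idx ns. \<Sum>j\<in>idx ns. A i j * B j i)"

text \<open>Conjugation K^dagger M K of an operator M on the system with dims ns[k:=n'] by a
local Kraus operator K : C^(ns!k) \<rightarrow> C^n' of party k (tensored with identities).\<close>

definition conj_local ::
  "nat list \<Rightarrow> nat \<Rightarrow> nat \<Rightarrow> (nat \<Rightarrow> nat \<Rightarrow> complex) \<Rightarrow> op \<Rightarrow> op" where
  "conj_local ns k n' K M i j =
     (if valid ns i \<and> valid ns j then
        (\<Sum>a<n'. \<Sum>b<n'. cnj (K a (i ! k)) * M (i[k := a]) (j[k := b]) * K b (j ! k))
      else 0)"

text \<open>LOCC measurements (finite-round protocols).  locc_povm ns M: the POVM
M :: outcome \<Rightarrow> operator is realisable by LOCC on the system with local dims ns.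
A protocol either stops and announces a fixed outcome, or some party k performs a local
instrument with Kraus operators K r : C^(ns!k) \<rightarrow> C^n' (r < R; local ancillas/dimension
change allowed), broadcasts r, and the protocol continues depending on r.\<close>

inductive locc_povm :: "nat list \<Rightarrow> (nat \<Rightarrow> op) \<Rightarrow> bool" where
  stop: "locc_povm ns (\<lambda>j. if j = j0 then idop ns else zeroop)"
| step: "\<lbrakk> k < length ns; (R::nat) > 0; (n'::nat) > 0;
           \<forall>x<ns ! k. \<forall>y<ns ! k.
              (\<Sum>r<R. \<Sum>a<n'. cnj (K r a x) * K r a y) = (if x = y then 1 else 0);
           \<forall>r<R. locc_povm (ns[k := n']) (Mr r) \<rbrakk>
         \<Longrightarrow> locc_povm ns (\<lambda>j i i'. \<Sum>r<R. conj_local ns k n' (K r) (Mr r j) i i')"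

definition pL :: "nat list \<Rightarrow> nat \<Rightarrow> (nat \<Rightarrow> real) \<Rightarrow> (nat \<Rightarrow> op) \<Rightarrow> real" where
  "pL ns N eta rho =
     Sup {Re (\<Sum>j<N. of_real (eta j) * tr ns (rho j) (M j)) | M. locc_povm ns M}"

text \<open>Given L ensembles (eta l, rho l) with N outcomes each, on m parties with local
dimension d, the sequence ensemble has outcomes c < N^L (the l-th label being the base-N
digit c div N^l mod N), m parties with local dimension d^L, where party k's local index
a < d^L encodes by its base-d digit a div d^l mod d the k-th qudit of copy l.\<close>

definition seq_eta :: "nat \<Rightarrow> nat \<Rightarrow> (nat \<Rightarrow> nat \<Rightarrow> real) \<Rightarrow> nat \<Rightarrow> real" where
  "seq_eta N L eta c = (\<Prod>l<L. eta l (c div N ^ l mod N))"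

definition seq_rho ::
  "nat \<Rightarrow> nat \<Rightarrow> nat \<Rightarrow> nat \<Rightarrow> (nat \<Rightarrow> nat \<Rightarrow> op) \<Rightarrow> nat \<Rightarrow> op" where
  "seq_rho m d N L rho c i j =
     (if valid (replicate m (d ^ L)) i \<and> valid (replicate m (d ^ L)) j then
        (\<Prod>l<L. rho l (c div N ^ l mod N) (map (\<lambda>a. a div d ^ l mod d) i)
                                          (map (\<lambda>a. a div d ^ l mod d) j))
      else 0)"

definition density :: "nat \<Rightarrow> (nat \<Rightarrow> nat \<Rightarrow> complex) \<Rightarrow> bool" where
  "density n A \<longleftrightarrow>
     (\<forall>a b. (n \<le> a \<or> n \<le> b) \<longrightarrow> A a b = 0) \<and>
     (\<forall>v :: nat \<Rightarrow> complex. Im (\<Sum>a<n. \<Sum>b<n. cnj (v a) * A a b * v b) = 0 \<and>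
                            Re (\<Sum>a<n. \<Sum>b<n. cnj (v a) * A a b * v b) \<ge> 0) \<and>
     (\<Sum>a<n. A a a) = 1"

definition prodop :: "nat list \<Rightarrow> (nat \<Rightarrow> nat \<Rightarrow> nat \<Rightarrow> complex) \<Rightarrow> op" where
  "prodop ns rhos i j =
     (if valid ns i \<and> valid ns j then (\<Prod>k<length ns. rhos k (i ! k) (j ! k)) else 0)"

definition separable :: "nat list \<Rightarrow> op \<Rightarrow> bool" where
  "separable ns \<sigma> \<longleftrightarrow>
     (\<exists>(T::nat) (p :: nat \<Rightarrow> real) (rhos :: nat \<Rightarrow> nat \<Rightarrow> nat \<Rightarrow> nat \<Rightarrow> complex).
        (\<forall>t<T. p t \<ge> 0) \<and> (\<Sum>t<T. p t) = 1 \<and>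
        (\<forall>t<T. \<forall>k<length ns. density (ns ! k) (rhos t k)) \<and>
        \<sigma> = (\<lambda>i j. \<Sum>t<T. of_real (p t) * prodop ns (rhos t) i j))"

definition block_positive :: "nat list \<Rightarrow> op \<Rightarrow> bool" where
  "block_positive ns E \<longleftrightarrow> (\<forall>\<sigma>. separable ns \<sigma> \<longrightarrow> Re (tr ns E \<sigma>) \<ge> 0)"

definition Id_md :: "nat \<Rightarrow> nat \<Rightarrow> op" where
  "Id_md m d = idop (replicate m d)"

definition GHZ :: "nat \<Rightarrow> nat \<Rightarrow> op" where
  "GHZ m d i j =
     (if valid (replicate m d) i \<and> valid (replicate m d) j \<and>
         (\<forall>k<m. i ! k = i ! 0) \<and> (\<forall>k<m. j ! k = j ! 0)
      then 1 / of_nat d else 0)"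

text \<open>The ensemble: outcome 0 is (eta_1, rho_1), outcome 1 is (eta_2, rho_2).\<close>

definition ens_eta :: "nat \<Rightarrow> nat \<Rightarrow> nat \<Rightarrow> real" where
  "ens_eta m d j =
     (if j = 0 then 2 * real d ^ m / (real d + 3 * real d ^ m)
      else if j = 1 then (real d + real d ^ m) / (real d + 3 * real d ^ m) else 0)"

definition ens_rho :: "nat \<Rightarrow> nat \<Rightarrow> nat \<Rightarrow> op" where
  "ens_rho m d j =
     (if j = 0 then (\<lambda>i i'. (1 / (2 * of_nat d ^ m)) *
                            (Id_md m d i i' + of_nat d ^ m * GHZ m d i i'))
      else if j = 1 then GHZ m d else zeroop)"

text \<open>(1 - d Phi) \<otimes> (1 + d^m Phi) on two copies, party k holding qudit k of both copies.\<close>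

definition witness_op :: "nat \<Rightarrow> nat \<Rightarrow> op" where
  "witness_op m d i j =
     (if valid (replicate m (d ^ 2)) i \<and> valid (replicate m (d ^ 2)) j then
        (Id_md m d (map (\<lambda>a. a mod d) i) (map (\<lambda>a. a mod d) j)
           - of_nat d * GHZ m d (map (\<lambda>a. a mod d) i) (map (\<lambda>a. a mod d) j)) *
        (Id_md m d (map (\<lambda>a. a div d mod d) i) (map (\<lambda>a. a div d mod d) j)
           + of_nat d ^ m * GHZ m d (map (\<lambda>a. a div d mod d) i) (map (\<lambda>a. a div d mod d) j))
      else 0)"

end

theory Submission
  imports Defs "HOL-Analysis.Convex"
begin


lemma valid_Nil[simp]: "valid [] i \<longleftrightarrow> i = []"
  by (auto simp: valid_def)

lemma valid_Cons_Cons[simp]: "valid (n#ns) (a#i) \<longleftrightarrow> a < n \<and> valid ns i"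
  by (auto simp: valid_def nth_Cons split: nat.splits)

lemma valid_Cons_Nil[simp]: "\<not> valid (n#ns) []"
  by (auto simp: valid_def)

lemma idx_Nil: "idx [] = {[]}" by (auto simp: idx_def)

lemma idx_Cons: "idx (n#ns) = (\<lambda>(a,i). a#i) ` ({..<n} \<times> idx ns)"
proof -
  have "x \<in> (\<lambda>(a,i). a#i) ` ({..<n} \<times> idx ns)" if "valid (n#ns) x" for x
    using that by (cases x) (auto simp: idx_def)
  then show ?thesis by (auto simp: idx_def)
qed

lemma finite_idx[simp]: "finite (idx ns)"
  by (induction ns) (auto simp: idx_Nil idx_Cons)

lemma sum_prod_idx:
  fixes f :: "nat \<Rightarrow> nat \<Rightarrow> 'a::comm_semiring_1"
  shows "(\<Sum>i\<in>idx ns. \<Prod>k<length ns. f k (i!k)) = (\<Prod>k<length ns. \<Sum>a<ns!k. f k a)"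
proof (induction ns arbitrary: f)
  case Nil
  then show ?case by (simp add: idx_Nil)
next
  case (Cons n ns)
  have inj: "inj_on (\<lambda>(a,i). a#i) ({..<n} \<times> idx ns)" by (auto simp: inj_on_def)
  have "(\<Sum>i\<in>idx (n#ns). \<Prod>k<length (n#ns). f k (i!k))
      = (\<Sum>(a,i)\<in>{..<n} \<times> idx ns. f 0 a * (\<Prod>k<length ns. f (Suc k) (i!k)))"
  proof -
    have e: "\<And>a i. (\<Prod>k<Suc (length ns). f k ((a#i)!k)) = f 0 a * (\<Prod>k<length ns. f (Suc k) (i!k))"
      by (simp only: prod.lessThan_Suc_shift) simp
    show ?thesis unfolding idx_Cons by (subst sum.reindex[OF inj]) (simp add: e case_prod_beta del: prod.lessThan_Suc)
  qed
  also have "\<dots> = (\<Sum>a<n. f 0 a) * (\<Sum>i\<in>idx ns. \<Prod>k<length ns. f (Suc k) (i!k))"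
    by (simp add: sum.cartesian_product[symmetric] sum_product)
  also have "\<dots> = (\<Sum>a<n. f 0 a) * (\<Prod>k<length ns. \<Sum>a<ns!k. f (Suc k) a)"
    using Cons.IH[of "\<lambda>k. f (Suc k)"] by simp
  also have "\<dots> = (\<Prod>k<length (n#ns). \<Sum>a<(n#ns)!k. f k a)"
    by (simp only: length_Cons prod.lessThan_Suc_shift) simp
  finally show ?case .
qed

lemma card_idx_rep: "card (idx (replicate m d)) = d ^ m"
proof -
  have "(\<Sum>i\<in>idx (replicate m d). \<Prod>k<length (replicate m d). (1::nat)) = (\<Prod>k<length (replicate m d). \<Sum>a<(replicate m d)!k. (1::nat))"
    by (rule sum_prod_idx)
  then show ?thesis by simp
qed



lemma valid_update: "valid ns i \<Longrightarrow> k < length ns \<Longrightarrow> a < n' \<Longrightarrow> valid (ns[k:=n']) (i[k:=a])"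
  by (auto simp: valid_def nth_list_update)

lemma prod_update_split:
  assumes "k < length ns" "length i = length ns" "length j = length ns"
  shows "(\<Prod>k'<length ns. f k' ((i[k:=a])!k') ((j[k:=b])!k'))
       = f k a b * (\<Prod>k'\<in>{..<length ns}-{k}. f k' (i!k') (j!k'))"
proof -
  have "(\<Prod>k'<length ns. f k' ((i[k:=a])!k') ((j[k:=b])!k'))
      = f k ((i[k:=a])!k) ((j[k:=b])!k) * (\<Prod>k'\<in>{..<length ns}-{k}. f k' ((i[k:=a])!k') ((j[k:=b])!k'))"
    using assms by (subst prod.remove[of _ k]) auto
  also have "\<dots> = f k a b * (\<Prod>k'\<in>{..<length ns}-{k}. f k' (i!k') (j!k'))"
    using assms by (auto intro!: prod.cong)
  finally show ?thesis .
qed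

lemma prod_fupd_split:
  assumes "k < n"
  shows "(\<Prod>k'<n. (f(k:=g)) k' (i!k') (j!k')) = g (i!k) (j!k) * (\<Prod>k'\<in>{..<n}-{k}. f k' (i!k') (j!k'))"
  using assms by (subst prod.remove[of _ k]) (auto intro!: prod.cong)

lemma conj_prodop:
  assumes "k < length ns"
  shows "conj_local ns k n' K (prodop (ns[k:=n']) f)
       = prodop ns (f(k := (\<lambda>x y. \<Sum>a<n'. \<Sum>b<n'. cnj (K a x) * f k a b * K b y)))"
proof (intro ext)
  fix i j
  show "conj_local ns k n' K (prodop (ns[k:=n']) f) i j
       = prodop ns (f(k := (\<lambda>x y. \<Sum>a<n'. \<Sum>b<n'. cnj (K a x) * f k a b * K b y))) i j"
  proof (cases "valid ns i \<and> valid ns j")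
    case False
    then show ?thesis by (auto simp: conj_local_def prodop_def)
  next
    case True
    then have li: "length i = length ns" and lj: "length j = length ns" by (auto simp: valid_def)
    define R where "R = (\<Prod>k'\<in>{..<length ns}-{k}. f k' (i!k') (j!k'))"
    have "conj_local ns k n' K (prodop (ns[k:=n']) f) i j
        = (\<Sum>a<n'. \<Sum>b<n'. cnj (K a (i!k)) * (f k a b * R) * K b (j!k))"
      unfolding conj_local_def prodop_def R_def using True assms li lj
      by (auto simp: valid_update prod_update_split intro!: sum.cong)
    also have "\<dots> = (\<Sum>a<n'. \<Sum>b<n'. cnj (K a (i!k)) * f k a b * K b (j!k)) * R"
      by (simp only: sum_distrib_right) (intro sum.cong refl, simp add: mult_ac)
    also have "\<dots> = prodop ns (f(k := (\<lambda>x y. \<Sum>a<n'. \<Sum>b<n'. cnj (K a x) * f k a b * K b y))) i j"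
      unfolding prodop_def R_def using True assms
      by (subst prod_fupd_split) auto
    finally show ?thesis .
  qed
qed

lemma prodop_sum_at:
  assumes "k < length ns"
  shows "(\<Sum>r\<in>S. prodop ns (F(k := h r)) i j) = prodop ns (F(k := (\<lambda>x y. \<Sum>r\<in>S. h r x y))) i j"
proof -
  have "(\<Prod>k'<length ns. (F(k:=g)) k' (i!k') (j!k')) = g (i!k) (j!k) * (\<Prod>k'\<in>{..<length ns}-{k}. F k' (i!k') (j!k'))" for g
    using assms by (rule prod_fupd_split)
  note e = this
  show ?thesis
  proof (cases "valid ns i \<and> valid ns j")
    case True then show ?thesis unfolding prodop_def
      by (simp add: e sum_distrib_right del: fun_upd_apply)
  next
    case False then show ?thesis unfolding prodop_def by auto
  qed
qed

lemma prodop_cong: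
  assumes "\<And>k x y. k < length ns \<Longrightarrow> x < ns!k \<Longrightarrow> y < ns!k \<Longrightarrow> f k x y = g k x y"
  shows "prodop ns f = prodop ns g"
  unfolding prodop_def using assms
  by (auto intro!: ext prod.cong simp: valid_def)

definition delta :: "nat \<Rightarrow> nat \<Rightarrow> complex" where
  "delta x y = (if x = y then 1 else 0)"

lemma idop_prodop: "idop ns = prodop ns (\<lambda>k. delta)"
proof (intro ext)
  fix i j
  show "idop ns i j = prodop ns (\<lambda>k. delta) i j"
  proof (cases "valid ns i \<and> valid ns j")
    case True
    then have l: "length i = length ns" "length j = length ns" by (auto simp: valid_def)
    have "(\<Prod>k<length ns. delta (i!k) (j!k)) = (if i = j then 1 else 0)"
    proof (cases "i = j")
      case True then show ?thesis by (simp add: delta_def)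
    next
      case False
      then obtain k where "k < length ns" "i!k \<noteq> j!k" using l nth_equalityI by metis
      then show ?thesis using False by (subst prod_zero) (auto simp: delta_def)
    qed
    then show ?thesis using True by (simp add: idop_def prodop_def)
  next
    case False
    then show ?thesis by (auto simp: idop_def prodop_def)
  qed
qed

lemma kraus_complete:
  assumes "k < length ns"
    and K: "\<forall>x<ns ! k. \<forall>y<ns ! k.
              (\<Sum>r<R. \<Sum>a<n'. cnj (K r a x) * K r a y) = (if x = y then 1 else 0)"
  shows "(\<Sum>r<R. conj_local ns k n' (K r) (idop (ns[k:=n'])) i j) = idop ns i j"
proof -
  have "(\<Sum>r<R. conj_local ns k n' (K r) (idop (ns[k:=n'])) i j)
      = (\<Sum>r<R. prodop ns ((\<lambda>k. delta)(k := (\<lambda>x y. \<Sum>a<n'. cnj (K r a x) * K r a y))) i j)"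
  proof (intro sum.cong refl)
    fix r
    have "conj_local ns k n' (K r) (idop (ns[k:=n'])) = 
          prodop ns ((\<lambda>k. delta)(k := (\<lambda>x y. \<Sum>a<n'. \<Sum>b<n'. cnj (K r a x) * delta a b * K r b y)))"
      unfolding idop_prodop using assms by (simp add: conj_prodop)
    also have "\<dots> = prodop ns ((\<lambda>k. delta)(k := (\<lambda>x y. \<Sum>a<n'. cnj (K r a x) * K r a y)))"
      by (simp add: delta_def if_distrib if_distribR cong: if_cong)
    finally show "conj_local ns k n' (K r) (idop (ns[k:=n'])) i j = prodop ns ((\<lambda>k. delta)(k := (\<lambda>x y. \<Sum>a<n'. cnj (K r a x) * K r a y))) i j" by simp
  qed
  also have "\<dots> = prodop ns ((\<lambda>k. delta)(k := (\<lambda>x y. \<Sum>r<R. \<Sum>a<n'. cnj (K r a x) * K r a y))) i j"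
    using assms(1) by (rule prodop_sum_at)
  also have "\<dots> = prodop ns (\<lambda>k. delta) i j"
  proof (rule arg_cong[where f="\<lambda>f. f i j"], rule prodop_cong)
    fix k' x y assume h: "k' < length ns" "x < ns!k'" "y < ns!k'"
    show "((\<lambda>k. delta)(k := (\<lambda>x y. \<Sum>r<R. \<Sum>a<n'. cnj (K r a x) * K r a y))) k' x y = delta x y"
    proof (cases "k' = k")
      case True
      then have "(\<Sum>r<R. \<Sum>a<n'. cnj (K r a x) * K r a y) = (if x = y then 1 else 0)"
        using K h by blast
      then show ?thesis using True by (simp add: delta_def)
    qed simp
  qed
  finally show ?thesis by (simp add: idop_prodop)
qed

lemma conj_sum:
  "conj_local ns k n' K (\<lambda>i j. \<Sum>s\<in>S. F s i j) i j = (\<Sum>s\<in>S. conj_local ns k n' K (F s) i j)"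
proof -
  have "(\<Sum>a<n'. \<Sum>b<n'. \<Sum>s\<in>S. g s a b) = (\<Sum>s\<in>S. \<Sum>a<n'. \<Sum>b<n'. g s a b)" for g :: "'a \<Rightarrow> nat \<Rightarrow> nat \<Rightarrow> complex"
  proof -
    have "(\<Sum>a<n'. \<Sum>b<n'. \<Sum>s\<in>S. g s a b) = (\<Sum>a<n'. \<Sum>s\<in>S. \<Sum>b<n'. g s a b)"
      by (rule sum.cong[OF refl], rule sum.swap)
    also have "\<dots> = (\<Sum>s\<in>S. \<Sum>a<n'. \<Sum>b<n'. g s a b)" by (rule sum.swap)
    finally show ?thesis .
  qed
  note sw = this
  show ?thesis
  proof (cases "valid ns i \<and> valid ns j")
    case True then show ?thesis unfolding conj_local_def
      by (simp only: sum_distrib_left sum_distrib_right sw) simp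
  next
    case False then show ?thesis unfolding conj_local_def by auto
  qed
qed



definition rk1 :: "nat list \<Rightarrow> (nat \<Rightarrow> nat \<Rightarrow> complex) \<Rightarrow> op" where
  "rk1 ns u = prodop ns (\<lambda>k x y. u k x * cnj (u k y))"

inductive cone :: "nat list \<Rightarrow> op \<Rightarrow> bool" for ns where
  cz: "cone ns (\<lambda>i j. 0)"
| ca: "cone ns X \<Longrightarrow> cone ns (\<lambda>i j. rk1 ns u i j + X i j)"

lemma cone_add: "cone ns X \<Longrightarrow> cone ns Y \<Longrightarrow> cone ns (\<lambda>i j. X i j + Y i j)"
proof (induction rule: cone.induct)
  case cz
  then show ?case by simp
next
  case (ca X u)
  then have "cone ns (\<lambda>i j. rk1 ns u i j + (X i j + Y i j))" by (intro cone.ca)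
  then show ?case by (simp add: add.assoc)
qed

lemma cone_sum: "(\<And>r. r \<in> S \<Longrightarrow> cone ns (F r)) \<Longrightarrow> cone ns (\<lambda>i j. \<Sum>r\<in>S. F r i j)"
proof (cases "finite S")
  case True
  assume "\<And>r. r \<in> S \<Longrightarrow> cone ns (F r)"
  with True show ?thesis
  proof (induction S rule: finite_induct)
    case empty
    then show ?case by (simp add: cone.cz)
  next
    case (insert x F')
    then show ?case by (simp add: cone_add)
  qed
next
  case False
  then show ?thesis by (simp add: cone.cz)
qed

lemma cone_rk1: "cone ns (rk1 ns u)"
  using cone.ca[OF cone.cz, of ns u] by simp

lemma valid_eq_iff:
  assumes "valid ns i" "valid ns x"
  shows "(\<forall>k<length ns. i!k = x!k) \<longleftrightarrow> i = x"
  using assms by (auto simp: valid_def intro: nth_equalityI)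

lemma cone_idop: "cone ns (idop ns)"
proof -
  define e where "e x = (\<lambda>k a. if a = x!k then 1 else (0::complex))" for x :: "nat list"
  have r: "rk1 ns (e x) i j = (if i = x \<and> j = x then 1 else 0)" if "x \<in> idx ns" for x i j
  proof (cases "valid ns i \<and> valid ns j")
    case True
    have "(\<Prod>k<length ns. e x k (i!k) * cnj (e x k (j!k))) = (\<Prod>k<length ns. (if i!k = x!k then 1 else 0) * (if j!k = x!k then 1 else 0))"
      by (auto simp: e_def intro!: prod.cong)
    also have "\<dots> = (if (\<forall>k<length ns. i!k = x!k) \<and> (\<forall>k<length ns. j!k = x!k) then 1 else 0)"
      by (auto simp: prod_zero_iff)
    also have "\<dots> = (if i = x \<and> j = x then 1 else 0)"
      using True that valid_eq_iff[of ns i x] valid_eq_iff[of ns j x] by (simp add: idx_def)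
    finally show ?thesis using True by (simp add: rk1_def prodop_def)
  next
    case False
    then show ?thesis using that by (auto simp: rk1_def prodop_def idx_def)
  qed
  have "idop ns = (\<lambda>i j. \<Sum>x\<in>idx ns. rk1 ns (e x) i j)"
  proof (intro ext)
    fix i j
    have "(\<Sum>x\<in>idx ns. rk1 ns (e x) i j) = (\<Sum>x\<in>idx ns. if x = i then (if j = i then 1 else 0) else 0)"
      by (intro sum.cong refl) (auto simp: r)
    also have "\<dots> = (if i \<in> idx ns then (if j = i then 1 else 0) else 0)"
      by (rule sum.delta[OF finite_idx])
    also have "\<dots> = idop ns i j" by (auto simp: idop_def idx_def)
    finally show "idop ns i j = (\<Sum>x\<in>idx ns. rk1 ns (e x) i j)" by simp
  qed
  moreover have "cone ns (\<lambda>i j. \<Sum>x\<in>idx ns. rk1 ns (e x) i j)"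
    by (rule cone_sum) (rule cone_rk1)
  ultimately show ?thesis by simp
qed

lemma conj_add: "conj_local ns k n' K (\<lambda>i j. A i j + B i j) i j = conj_local ns k n' K A i j + conj_local ns k n' K B i j"
proof -
  have "(\<Sum>a<n'. \<Sum>b<n'. cnj (K a (i ! k)) * (A (i[k := a]) (j[k := b]) + B (i[k := a]) (j[k := b])) * K b (j ! k))
    = (\<Sum>a<n'. \<Sum>b<n'. cnj (K a (i ! k)) * A (i[k := a]) (j[k := b]) * K b (j ! k))
     + (\<Sum>a<n'. \<Sum>b<n'. cnj (K a (i ! k)) * B (i[k := a]) (j[k := b]) * K b (j ! k))"
    by (simp only: sum.distrib[symmetric] ring_distribs)
  then show ?thesis unfolding conj_local_def by simp
qed

lemma conj_diff: "conj_local ns k n' K (\<lambda>i j. A i j - B i j) i j = conj_local ns k n' K A i j - conj_local ns k n' K B i j"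
  unfolding conj_local_def by (simp add: left_diff_distrib right_diff_distrib sum_subtractf)

lemma conj_zero: "conj_local ns k n' K (\<lambda>i j. 0) = (\<lambda>i j. 0)"
  unfolding conj_local_def by (intro ext) simp

lemma conj_rk1:
  assumes "k < length ns"
  shows "conj_local ns k n' K (rk1 (ns[k:=n']) u) = rk1 ns (u(k := (\<lambda>x. \<Sum>a<n'. cnj (K a x) * u k a)))"
proof -
  have "conj_local ns k n' K (rk1 (ns[k:=n']) u)
     = prodop ns ((\<lambda>k x y. u k x * cnj (u k y))(k := (\<lambda>x y. \<Sum>a<n'. \<Sum>b<n'. cnj (K a x) * (u k a * cnj (u k b)) * K b y)))"
    unfolding rk1_def using assms by (rule conj_prodop)
  also have "\<dots> = rk1 ns (u(k := (\<lambda>x. \<Sum>a<n'. cnj (K a x) * u k a)))"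
    unfolding rk1_def
  proof (rule arg_cong[where f="prodop ns"], intro ext)
    fix k' x y
    show "((\<lambda>k x y. u k x * cnj (u k y))(k := (\<lambda>x y. \<Sum>a<n'. \<Sum>b<n'. cnj (K a x) * (u k a * cnj (u k b)) * K b y))) k' x y
        = (u(k := (\<lambda>x. \<Sum>a<n'. cnj (K a x) * u k a))) k' x * cnj ((u(k := (\<lambda>x. \<Sum>a<n'. cnj (K a x) * u k a))) k' y)"
      by (cases "k' = k") (simp_all add: sum_distrib_left sum_distrib_right mult_ac)
  qed
  finally show ?thesis .
qed

lemma cone_conj:
  assumes "cone (ns[k:=n']) X" "k < length ns"
  shows "cone ns (conj_local ns k n' K X)"
  using assms(1)
proof (induction rule: cone.induct)
  case cz
  then show ?case by (simp add: conj_zero cone.cz)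
next
  case (ca X u)
  have "conj_local ns k n' K (\<lambda>i j. rk1 (ns[k:=n']) u i j + X i j)
      = (\<lambda>i j. rk1 ns (u(k := (\<lambda>x. \<Sum>a<n'. cnj (K a x) * u k a))) i j + conj_local ns k n' K X i j)"
    using assms(2) by (intro ext) (simp add: conj_add conj_rk1)
  then show ?case using ca by (simp add: cone.ca)
qed

lemma locc_cone:
  assumes "locc_povm ns M"
  shows "cone ns (\<lambda>i j. \<Sum>c\<in>S. M c i j) \<and> cone ns (\<lambda>i j. idop ns i j - (\<Sum>c\<in>S. M c i j))"
  using assms
proof (induction arbitrary: S rule: locc_povm.induct)
  case (stop ns j0)
  have e0: "\<And>c i j. (if c = j0 then idop ns else zeroop) i j = (if c = j0 then idop ns i j else 0)"
    by (simp add: zeroop_def)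
  have e: "(\<Sum>c\<in>S. (if c = j0 then idop ns else zeroop) i j) = (if finite S \<and> j0 \<in> S then idop ns i j else 0)" for i j
    by (cases "finite S", simp_all add: e0)
  show ?case
  proof (cases "finite S \<and> j0 \<in> S")
    case True
    then show ?thesis by (simp add: e cone_idop cone.cz)
  next
    case False
    then have "(\<Sum>c\<in>S. (if c = j0 then idop ns else zeroop) i j) = 0" for i j
      by (cases "finite S") (simp_all add: e0)
    then show ?thesis by (simp add: cone_idop cone.cz)
  qed
next
  case (step k ns R n' K Mr)
  have sw: "(\<Sum>c\<in>S. \<Sum>r<R. conj_local ns k n' (K r) (Mr r c) i j) = (\<Sum>r<R. conj_local ns k n' (K r) (\<lambda>i j. \<Sum>c\<in>S. Mr r c i j) i j)" for i j
    by (subst sum.swap) (simp add: conj_sum)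
  have c1: "cone ns (\<lambda>i j. \<Sum>r<R. conj_local ns k n' (K r) (\<lambda>i j. \<Sum>c\<in>S. Mr r c i j) i j)"
    using step by (rule_tac cone_sum, rule_tac cone_conj) auto
  have e2: "idop ns i j - (\<Sum>r<R. conj_local ns k n' (K r) (\<lambda>i j. \<Sum>c\<in>S. Mr r c i j) i j)
     = (\<Sum>r<R. conj_local ns k n' (K r) (\<lambda>i j. idop (ns[k:=n']) i j - (\<Sum>c\<in>S. Mr r c i j)) i j)" for i j
    using kraus_complete[OF step(1) step(4), of i j, symmetric]
    by (simp add: conj_diff sum_subtractf)
  have c2: "cone ns (\<lambda>i j. \<Sum>r<R. conj_local ns k n' (K r) (\<lambda>i j. idop (ns[k:=n']) i j - (\<Sum>c\<in>S. Mr r c i j)) i j)"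
    using step by (rule_tac cone_sum, rule_tac cone_conj) auto
  show ?case using c1 c2 by (simp add: sw e2)
qed



definition pv :: "nat list \<Rightarrow> (nat \<Rightarrow> nat \<Rightarrow> complex) \<Rightarrow> nat list \<Rightarrow> complex" where
  "pv ns u i = (if valid ns i then (\<Prod>k<length ns. u k (i!k)) else 0)"

lemma rk1_pv: "rk1 ns u i j = pv ns u i * cnj (pv ns u j)"
  by (simp add: rk1_def prodop_def pv_def prod.distrib)

lemma tr_add2: "tr ns Y (\<lambda>i j. A i j + B i j) = tr ns Y A + tr ns Y B"
  unfolding tr_def by (simp add: distrib_left sum.distrib)

lemma tr_diff2: "tr ns Y (\<lambda>i j. A i j - B i j) = tr ns Y A - tr ns Y B"
  unfolding tr_def by (simp add: right_diff_distrib sum_subtractf)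

lemma tr_zero2: "tr ns Y (\<lambda>i j. 0) = 0"
  unfolding tr_def by simp

lemma tr_lin1: "tr ns (\<lambda>i j. A i j - c * B i j) X = tr ns A X - c * tr ns B X"
proof -
  have "\<And>i j. (A i j - c * B i j) * X j i = A i j * X j i - c * (B i j * X j i)" by (simp add: algebra_simps)
  then show ?thesis unfolding tr_def by (simp add: sum_subtractf sum_distrib_left)
qed

lemma tr_lin1p: "tr ns (\<lambda>i j. c * (A i j + e * B i j)) X = c * (tr ns A X + e * tr ns B X)"
proof -
  have "\<And>i j. c * (A i j + e * B i j) * X j i = c * (A i j * X j i) + c * (e * (B i j * X j i))" by (simp add: algebra_simps)
  then show ?thesis unfolding tr_def by (simp add: sum.distrib sum_distrib_left distrib_left)
qed

lemma cone_Re_nonneg: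
  assumes "\<And>u. 0 \<le> Re (tr ns Y (rk1 ns u))" "cone ns X"
  shows "0 \<le> Re (tr ns Y X)"
  using assms(2)
proof (induction rule: cone.induct)
  case cz
  then show ?case by (simp add: tr_zero2)
next
  case (ca X u)
  then show ?case using assms(1)[of u] by (simp add: tr_add2)
qed

lemma cone_diag:
  assumes "cone ns X"
  shows "Im (X i i) = 0 \<and> 0 \<le> Re (X i i) \<and> cmod (X i j) \<le> (Re (X i i) + Re (X j j)) / 2"
  using assms
proof (induction rule: cone.induct)
  case cz
  then show ?case by simp
next
  case (ca X u)
  define p where "p = pv ns u i"
  define q where "q = pv ns u j"
  have ii: "rk1 ns u i i = of_real (cmod p ^ 2)" unfolding rk1_pv p_def by (rule complex_norm_square[symmetric])
  have jj: "rk1 ns u j j = of_real (cmod q ^ 2)" unfolding rk1_pv q_def by (rule complex_norm_square[symmetric])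
  have ij: "cmod (rk1 ns u i j) = cmod p * cmod q" by (simp add: rk1_pv p_def q_def norm_mult)
  have am: "cmod p * cmod q \<le> (cmod p ^ 2 + cmod q ^ 2) / 2"
    using sum_squares_bound[of "cmod p" "cmod q"] by (simp add: power2_eq_square)
  have "cmod (rk1 ns u i j + X i j) \<le> cmod (rk1 ns u i j) + cmod (X i j)" by (rule norm_triangle_ineq)
  moreover have "Re (rk1 ns u i i) = cmod p ^ 2" "Im (rk1 ns u i i) = 0" using ii by simp_all
  moreover have "Re (rk1 ns u j j) = cmod q ^ 2" using jj by simp
  ultimately show ?case using ca ij am by simp
qed

lemma tr_idop1: "tr ns (idop ns) X = (\<Sum>i\<in>idx ns. X i i)"
proof -
  have "tr ns (idop ns) X = (\<Sum>i\<in>idx ns. \<Sum>j\<in>idx ns. if j = i then X j i else 0)"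
    unfolding tr_def by (intro sum.cong refl) (case_tac "i = x", simp_all add: idop_def idx_def)
  also have "\<dots> = (\<Sum>i\<in>idx ns. X i i)"
    by (simp add: sum.delta[OF finite_idx])
  finally show ?thesis .
qed

lemma tr_idop2: "tr ns Y (idop ns) = (\<Sum>i\<in>idx ns. Y i i)"
proof -
  have "tr ns Y (idop ns) = (\<Sum>i\<in>idx ns. \<Sum>j\<in>idx ns. if j = i then Y i j else 0)"
    unfolding tr_def by (intro sum.cong refl) (case_tac "x = xa", simp_all add: idop_def idx_def)
  also have "\<dots> = (\<Sum>i\<in>idx ns. Y i i)"
    by (simp add: sum.delta[OF finite_idx])
  finally show ?thesis .
qed

definition Cs :: "nat \<Rightarrow> nat \<Rightarrow> nat list set" where
  "Cs m d = {x. valid (replicate m d) x \<and> (\<forall>k<m. x!k = x!0)}"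

lemma Cs_eq:
  assumes "m \<ge> 1"
  shows "Cs m d = (\<lambda>a. replicate m a) ` {..<d}"
proof
  show "Cs m d \<subseteq> (\<lambda>a. replicate m a) ` {..<d}"
  proof
    fix x assume "x \<in> Cs m d"
    then have vc: "valid (replicate m d) x \<and> (\<forall>k<m. x!k = x!0)" unfolding Cs_def mem_Collect_eq by blast
    note v0 = vc[THEN conjunct1] and c = vc[THEN conjunct2]
    from v0 have v: "length x = m" "\<forall>k<m. x!k < d" by (simp_all add: valid_def)
    have "x = replicate m (x!0)"
    proof (rule nth_equalityI)
      show "length x = length (replicate m (x!0))" using v by simp
      fix k assume "k < length x"
      then have "k < m" using v by simp
      then have "x!k = x!0" using c by blast
      then show "x!k = replicate m (x!0) ! k" using \<open>k < m\<close> by (simp only: nth_replicate)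
    qed
    moreover have "x!0 < d" using v assms by auto
    ultimately show "x \<in> (\<lambda>a. replicate m a) ` {..<d}" by blast
  qed
next
  show "(\<lambda>a. replicate m a) ` {..<d} \<subseteq> Cs m d"
    using assms by (auto simp: Cs_def valid_def)
qed

lemma inj_rep: "m \<ge> 1 \<Longrightarrow> inj_on (\<lambda>a. replicate m a) A"
  by (auto simp: inj_on_def)

lemma Cs_sub: "Cs m d \<subseteq> idx (replicate m d)"
  by (auto simp: Cs_def idx_def)

lemma sum_Cs:
  assumes "m \<ge> 1"
  shows "(\<Sum>x\<in>Cs m d. f x) = (\<Sum>a<d. f (replicate m a))"
  unfolding Cs_eq[OF assms] by (subst sum.reindex[OF inj_rep[OF assms]]) simp

lemma sum_restrict: "A \<subseteq> B \<Longrightarrow> finite B \<Longrightarrow> (\<Sum>x\<in>B. if x \<in> A then f x else 0) = (\<Sum>x\<in>A. f x)"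
  by (simp add: sum.inter_restrict[symmetric] Int_absorb1)

lemma sum_restrict2: "A \<subseteq> idx ns \<Longrightarrow>
  (\<Sum>i\<in>idx ns. \<Sum>j\<in>idx ns. if i \<in> A then (if j \<in> A then f i j else 0) else 0) = (\<Sum>i\<in>A. \<Sum>j\<in>A. f i j)"
proof -
  assume a: "A \<subseteq> idx ns"
  have "(\<Sum>i\<in>idx ns. \<Sum>j\<in>idx ns. if i \<in> A then (if j \<in> A then f i j else 0) else 0)
      = (\<Sum>i\<in>idx ns. if i \<in> A then (\<Sum>j\<in>A. f i j) else 0)"
    using a by (intro sum.cong refl) (simp add: sum_restrict)
  also have "\<dots> = (\<Sum>i\<in>A. \<Sum>j\<in>A. f i j)" using a by (simp add: sum_restrict)
  finally show ?thesis .
qed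

lemma GHZ_Cs: "GHZ m d i j = (if i \<in> Cs m d \<and> j \<in> Cs m d then 1 / of_nat d else 0)"
  by (simp only: GHZ_def Cs_def mem_Collect_eq conj_ac)

lemma tr_GHZ1:
  assumes "m \<ge> 1"
  shows "tr (replicate m d) (GHZ m d) X = (\<Sum>a<d. \<Sum>b<d. X (replicate m b) (replicate m a)) / of_nat d"
proof -
  have "tr (replicate m d) (GHZ m d) X = (\<Sum>i\<in>idx (replicate m d). \<Sum>j\<in>idx (replicate m d).
        if i \<in> Cs m d then (if j \<in> Cs m d then X j i / of_nat d else 0) else 0)"
    unfolding tr_def GHZ_Cs by (intro sum.cong refl) auto
  also have "\<dots> = (\<Sum>i\<in>Cs m d. \<Sum>j\<in>Cs m d. X j i / of_nat d)"
    using Cs_sub[of m d] by (simp add: sum_restrict2)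
  also have "\<dots> = (\<Sum>a<d. \<Sum>b<d. X (replicate m b) (replicate m a)) / of_nat d"
    by (simp add: sum_Cs[OF assms] sum_divide_distrib)
  finally show ?thesis .
qed

lemma tr_GHZ2:
  assumes "m \<ge> 1"
  shows "tr (replicate m d) Y (GHZ m d) = (\<Sum>a<d. \<Sum>b<d. Y (replicate m a) (replicate m b)) / of_nat d"
proof -
  have "tr (replicate m d) Y (GHZ m d) = (\<Sum>i\<in>idx (replicate m d). \<Sum>j\<in>idx (replicate m d).
        if i \<in> Cs m d then (if j \<in> Cs m d then Y i j / of_nat d else 0) else 0)"
    unfolding tr_def GHZ_Cs by (intro sum.cong refl) auto
  also have "\<dots> = (\<Sum>i\<in>Cs m d. \<Sum>j\<in>Cs m d. Y i j / of_nat d)"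
    using Cs_sub[of m d] by (simp add: sum_restrict2)
  also have "\<dots> = (\<Sum>a<d. \<Sum>b<d. Y (replicate m a) (replicate m b)) / of_nat d"
    by (simp add: sum_Cs[OF assms] sum_divide_distrib)
  finally show ?thesis .
qed



lemma cs_prod:
  fixes v :: "nat \<Rightarrow> nat \<Rightarrow> real"
  assumes "2 \<le> m" "\<And>k a. 0 \<le> v k a"
  shows "(\<Sum>a<d. \<Prod>k<m. v k a)^2 \<le> (\<Prod>k<m. \<Sum>a<d. (v k a)^2)"
proof -
  define N where "N k = (\<Sum>a<d. (v k a)^2)" for k
  have N0: "0 \<le> N k" for k unfolding N_def by (simp add: sum_nonneg)
  have split: "{..<m} = {0,1} \<union> {2..<m}" using assms(1) by auto
  have pr: "(\<Prod>k<m. f k) = f 0 * f 1 * (\<Prod>k\<in>{2..<m}. f k)" for f :: "nat \<Rightarrow> real"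
    unfolding split by (subst prod.union_disjoint) auto
  define C where "C = (\<Prod>k\<in>{2..<m}. sqrt (N k))"
  have vle: "v k a \<le> sqrt (N k)" if "a < d" for k a
  proof -
    have "(v k a)^2 \<le> N k" unfolding N_def using that
      by (intro member_le_sum) auto
    then show ?thesis using assms(2) real_le_rsqrt by blast
  qed
  have pc: "(\<Prod>k\<in>{2..<m}. v k a) \<le> C" if "a < d" for a
    unfolding C_def using vle[OF that] assms(2) by (intro prod_mono) auto
  have C0: "0 \<le> C" unfolding C_def by (intro prod_nonneg) (simp add: N0)
  have "(\<Sum>a<d. \<Prod>k<m. v k a) = (\<Sum>a<d. v 0 a * v 1 a * (\<Prod>k\<in>{2..<m}. v k a))"
    by (simp add: pr)
  also have "\<dots> \<le> (\<Sum>a<d. v 0 a * v 1 a * C)"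
    using pc assms(2) by (intro sum_mono mult_left_mono) (auto simp: mult_nonneg_nonneg)
  also have "\<dots> = C * (\<Sum>a<d. v 0 a * v 1 a)" by (simp add: sum_distrib_left mult_ac)
  finally have le1: "(\<Sum>a<d. \<Prod>k<m. v k a) \<le> C * (\<Sum>a<d. v 0 a * v 1 a)" .
  have ge0: "0 \<le> (\<Sum>a<d. \<Prod>k<m. v k a)" using assms(2) by (simp add: sum_nonneg prod_nonneg)
  have "(\<Sum>a<d. \<Prod>k<m. v k a)^2 \<le> (C * (\<Sum>a<d. v 0 a * v 1 a))^2"
    using le1 ge0 by (intro power_mono) auto
  also have "\<dots> = C^2 * (\<Sum>a<d. v 0 a * v 1 a)^2" by (simp add: power_mult_distrib)
  also have "\<dots> \<le> C^2 * (N 0 * N 1)"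
    unfolding N_def by (intro mult_left_mono Cauchy_Schwarz_ineq_sum) auto
  also have "C^2 = (\<Prod>k\<in>{2..<m}. N k)"
    unfolding C_def by (simp add: prod_power_distrib N0)
  also have "(\<Prod>k\<in>{2..<m}. N k) * (N 0 * N 1) = (\<Prod>k<m. N k)" by (simp add: pr mult_ac)
  finally show ?thesis by (simp add: N_def)
qed

lemma Id_md_idop: "Id_md m d = idop (replicate m d)" by (simp add: Id_md_def)

lemma tr_Id_rk1:
  "tr (replicate m d) (Id_md m d) (rk1 (replicate m d) u) = of_real (\<Prod>k<m. \<Sum>a<d. (cmod (u k a))^2)"
proof -
  have "tr (replicate m d) (Id_md m d) (rk1 (replicate m d) u) = (\<Sum>i\<in>idx (replicate m d). rk1 (replicate m d) u i i)"
    by (simp add: Id_md_idop tr_idop1)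
  also have "\<dots> = (\<Sum>i\<in>idx (replicate m d). of_real (\<Prod>k<length (replicate m d). (cmod (u k (i!k)))^2))"
  proof (intro sum.cong refl)
    fix i assume "i \<in> idx (replicate m d)"
    have e1: "rk1 (replicate m d) u i i = of_real ((cmod (pv (replicate m d) u i))^2)"
      by (simp only: rk1_pv complex_norm_square)
    have e2: "(cmod (pv (replicate m d) u i))^2 = (\<Prod>k<length (replicate m d). (cmod (u k (i!k)))^2)"
      using \<open>i \<in> idx (replicate m d)\<close> by (simp add: pv_def idx_def prod_norm[symmetric] prod_power_distrib)
    show "rk1 (replicate m d) u i i = of_real (\<Prod>k<length (replicate m d). (cmod (u k (i!k)))^2)"
      by (simp only: e1 e2)
  qed
  also have "\<dots> = of_real (\<Sum>i\<in>idx (replicate m d). \<Prod>k<length (replicate m d). (cmod (u k (i!k)))^2)"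
    by simp
  also have "\<dots> = of_real (\<Prod>k<m. \<Sum>a<d. (cmod (u k a))^2)"
    by (subst sum_prod_idx) simp
  finally show ?thesis .
qed

lemma tr_GHZ_rk1:
  assumes "m \<ge> 1"
  shows "tr (replicate m d) (GHZ m d) (rk1 (replicate m d) u) = of_real ((cmod (\<Sum>a<d. \<Prod>k<m. u k a))^2) / of_nat d"
proof -
  define s where "s = (\<Sum>a<d. \<Prod>k<m. u k a)"
  have pvr: "pv (replicate m d) u (replicate m a) = (\<Prod>k<m. u k a)" if "a < d" for a
    using that by (simp add: pv_def valid_def)
  have "(\<Sum>a<d. \<Sum>b<d. rk1 (replicate m d) u (replicate m b) (replicate m a))
      = (\<Sum>a<d. \<Sum>b<d. (\<Prod>k<m. u k b) * cnj (\<Prod>k<m. u k a))"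
    by (intro sum.cong refl) (simp add: rk1_pv pvr)
  also have "\<dots> = s * cnj s" by (simp add: s_def sum_distrib_left sum_distrib_right mult_ac)
  also have "\<dots> = of_real ((cmod s)^2)" by (rule complex_norm_square[symmetric])
  finally show ?thesis using tr_GHZ1[OF assms] by (simp add: s_def)
qed

context
  fixes m d :: nat
  assumes m2: "m \<ge> 2" and d2: "d \<ge> 2"
begin

lemma cone_Id_GHZ:
  assumes "cone (replicate m d) X"
  shows "0 \<le> Re (tr (replicate m d) (GHZ m d) X)"
    and "0 \<le> Re (tr (replicate m d) (Id_md m d) X)"
    and "real d * Re (tr (replicate m d) (GHZ m d) X) \<le> Re (tr (replicate m d) (Id_md m d) X)"
proof -
  have m1: "m \<ge> 1" using m2 by simp
  show "0 \<le> Re (tr (replicate m d) (GHZ m d) X)"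
    using assms by (rule cone_Re_nonneg[rotated]) (simp add: tr_GHZ_rk1[OF m1])
  show "0 \<le> Re (tr (replicate m d) (Id_md m d) X)"
    using assms by (rule cone_Re_nonneg[rotated]) (simp only: tr_Id_rk1 Re_complex_of_real, intro prod_nonneg sum_nonneg, simp)
  have "0 \<le> Re (tr (replicate m d) (\<lambda>i j. Id_md m d i j - of_nat d * GHZ m d i j) X)"
    using assms
  proof (rule cone_Re_nonneg[rotated])
    fix u
    have "(cmod (\<Sum>a<d. \<Prod>k<m. u k a))^2 \<le> (\<Sum>a<d. \<Prod>k<m. cmod (u k a))^2"
      by (intro power_mono) (auto intro!: order_trans[OF norm_sum] simp: prod_norm[symmetric])
    also have "\<dots> \<le> (\<Prod>k<m. \<Sum>a<d. (cmod (u k a))^2)"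
      by (rule cs_prod[OF m2]) simp
    finally show "0 \<le> Re (tr (replicate m d) (\<lambda>i j. Id_md m d i j - of_nat d * GHZ m d i j) (rk1 (replicate m d) u))"
      using d2 by (simp add: tr_lin1 tr_Id_rk1 tr_GHZ_rk1[OF m1] del: of_real_prod of_real_sum of_real_power)
  qed
  then show "real d * Re (tr (replicate m d) (GHZ m d) X) \<le> Re (tr (replicate m d) (Id_md m d) X)"
    by (simp add: tr_lin1)
qed

end



lemma Re_of_nat_mult: "Re (of_nat n * z) = real n * Re z"
  by (induct n) (simp_all add: distrib_right)

lemma Re_of_real_mult: "Re (of_real r * z) = r * Re z"
  by simp

lemma ineq1:
  fixes P dd b1 b2 a g :: real
  assumes "P > 0" "dd > 0" "b1 \<ge> 0" "b2 \<ge> 0" "dd * g \<le> a"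
  shows "(2*P/(dd+3*P)) * (1 - (b1+P*b2)/(2*P) - (a+P*g)/(2*P)) + ((dd+P)/(dd+3*P)) * g \<le> 2*P/(dd+3*P)"
proof -
  have D: "dd + 3*P > 0" using assms by simp
  have e1: "(2*P/(dd+3*P)) * (1 - (b1+P*b2)/(2*P) - (a+P*g)/(2*P)) = (2*P - (b1+P*b2) - (a+P*g))/(dd+3*P)"
  proof -
    define DD where "DD = dd+3*P"
    define X where "X = b1+P*b2"
    define Y where "Y = a+P*g"
    have "(2*P/DD) * (1 - X/(2*P) - Y/(2*P)) = 2*P/DD - (2*P/DD)*(X/(2*P)) - (2*P/DD)*(Y/(2*P))"
      by (simp add: algebra_simps)
    also have "(2*P/DD)*(X/(2*P)) = X/DD" using assms by simp
    also have "(2*P/DD)*(Y/(2*P)) = Y/DD" using assms by simp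
    also have "2*P/DD - X/DD - Y/DD = (2*P - X - Y)/DD" by (simp add: diff_divide_distrib)
    finally show ?thesis by (simp add: DD_def X_def Y_def)
  qed
  have e2: "((dd+P)/(dd+3*P)) * g = ((dd+P)*g)/(dd+3*P)" by simp
  have "(2*P/(dd+3*P)) * (1 - (b1+P*b2)/(2*P) - (a+P*g)/(2*P)) + ((dd+P)/(dd+3*P)) * g
      = (2*P - (b1+P*b2) - (a+P*g) + (dd+P)*g)/(dd+3*P)"
    unfolding e1 e2 by (simp add: add_divide_distrib)
  also have "\<dots> = (2*P - b1 - P*b2 - a + dd*g)/(dd+3*P)" by (simp add: algebra_simps)
  finally have "(2*P/(dd+3*P)) * (1 - (b1+P*b2)/(2*P) - (a+P*g)/(2*P)) + ((dd+P)/(dd+3*P)) * g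
      = (2*P - b1 - P*b2 - a + dd*g)/(dd+3*P)" .
  also have "\<dots> \<le> 2*P/(dd+3*P)"
  proof (rule divide_right_mono)
    have "0 \<le> P*b2" using assms by simp
    then show "2*P - b1 - P*b2 - a + dd*g \<le> 2*P" using assms by linarith
  qed (use D in simp)
  finally show ?thesis .
qed

lemma zeroop_eq: "zeroop = (\<lambda>i j. 0)" by (intro ext) (simp add: zeroop_def)

context
  fixes m d :: nat
  assumes m2: "m \<ge> 2" and d2: "d \<ge> 2"
begin

lemma m1: "m \<ge> 1" using m2 by simp

lemma ens_rho0: "ens_rho m d 0 = (\<lambda>i i'. (1 / (2 * of_nat d ^ m)) * (Id_md m d i i' + of_nat d ^ m * GHZ m d i i'))"
  by (simp add: ens_rho_def)

lemma tr_rho1: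
  "Re (tr (replicate m d) (ens_rho m d 0) X) =
     (Re (tr (replicate m d) (Id_md m d) X) + real d ^ m * Re (tr (replicate m d) (GHZ m d) X)) / (2 * real d ^ m)"
proof -
  have "tr (replicate m d) (ens_rho m d 0) X
     = (1 / (2 * of_nat d ^ m)) * (tr (replicate m d) (Id_md m d) X + of_nat d ^ m * tr (replicate m d) (GHZ m d) X)"
    by (simp only: ens_rho0 tr_lin1p)
  also have "\<dots> = (tr (replicate m d) (Id_md m d) X + of_nat (d ^ m) * tr (replicate m d) (GHZ m d) X) / of_nat (2 * d ^ m)"
    by simp
  finally show ?thesis by (simp only: Re_divide_of_nat) (simp add: Re_of_nat_mult)
qed

lemma tr_Id_Id: "tr (replicate m d) (Id_md m d) (idop (replicate m d)) = of_nat (d ^ m)"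
proof -
  have "tr (replicate m d) (Id_md m d) (idop (replicate m d)) = (\<Sum>i\<in>idx (replicate m d). 1)"
    by (simp add: tr_idop2 Id_md_idop idop_def idx_def)
  then show ?thesis by (simp add: card_idx_rep)
qed

lemma idop_rep: "a < d \<Longrightarrow> b < d \<Longrightarrow> idop (replicate m d) (replicate m b) (replicate m a) = (if a = b then 1 else 0)"
  using inj_rep[OF m1, of UNIV] by (auto simp: idop_def valid_def inj_on_def)

lemma tr_GHZ_Id: "tr (replicate m d) (GHZ m d) (idop (replicate m d)) = 1"
proof -
  have "(\<Sum>a<d. \<Sum>b<d. idop (replicate m d) (replicate m b) (replicate m a)) = (\<Sum>a<d. \<Sum>b<d. if a = b then 1 else 0)"
    by (intro sum.cong refl) (simp add: idop_rep)
  then have "tr (replicate m d) (GHZ m d) (idop (replicate m d)) = (\<Sum>a<d. \<Sum>b<d. if a = b then 1 else 0) / of_nat d"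
    by (simp add: tr_GHZ1[OF m1])
  also have "\<dots> = 1" using d2 by simp
  finally show ?thesis .
qed

lemma tr_rho1_Id: "Re (tr (replicate m d) (ens_rho m d 0) (idop (replicate m d))) = 1"
proof -
  have a: "Re (tr (replicate m d) (Id_md m d) (idop (replicate m d))) = real d ^ m" using tr_Id_Id by simp
  have b: "Re (tr (replicate m d) (GHZ m d) (idop (replicate m d))) = 1" using tr_GHZ_Id by simp
  show ?thesis using d2 by (simp only: tr_rho1 a b) simp
qed

lemma val_le:
  assumes "locc_povm (replicate m d) M"
  shows "Re (\<Sum>j<2. of_real (ens_eta m d j) * tr (replicate m d) (ens_rho m d j) (M j)) \<le> ens_eta m d 0"
proof -
  let ?ns = "replicate m d"
  have cA: "cone ?ns (\<lambda>i j. idop ?ns i j - (\<Sum>c\<in>{0,1}. M c i j))" using locc_cone[OF assms] by blast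
  have c1': "cone ?ns (\<lambda>i j. \<Sum>c\<in>{1}. M c i j)" using locc_cone[OF assms] by blast
  have c1: "cone ?ns (M 1)" using c1' by simp
  define B where "B = (\<lambda>i j. idop ?ns i j - (M 0 i j + M 1 i j))"
  have cB: "cone ?ns B" using cA by (simp add: B_def)
  have M0: "M 0 = (\<lambda>i j. (idop ?ns i j - B i j) - M 1 i j)" by (intro ext) (simp add: B_def)
  define a where "a = Re (tr ?ns (Id_md m d) (M 1))"
  define g where "g = Re (tr ?ns (GHZ m d) (M 1))"
  define b1 where "b1 = Re (tr ?ns (Id_md m d) B)"
  define b2 where "b2 = Re (tr ?ns (GHZ m d) B)"
  have b1: "0 \<le> b1" and b2: "0 \<le> b2" using cone_Id_GHZ[OF m2 d2 cB] by (simp_all add: b1_def b2_def)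
  have ag: "real d * g \<le> a" using cone_Id_GHZ[OF m2 d2 c1] by (simp add: a_def g_def)
  have t0: "Re (tr ?ns (ens_rho m d 0) (M 0)) = 1 - (b1 + real d ^ m * b2) / (2 * real d ^ m) - (a + real d ^ m * g) / (2 * real d ^ m)"
  proof -
    have "Re (tr ?ns (ens_rho m d 0) (M 0)) = Re (tr ?ns (ens_rho m d 0) (idop ?ns)) - Re (tr ?ns (ens_rho m d 0) B) - Re (tr ?ns (ens_rho m d 0) (M 1))"
      unfolding M0 tr_diff2 by simp
    also have "\<dots> = 1 - (b1 + real d ^ m * b2) / (2 * real d ^ m) - (a + real d ^ m * g) / (2 * real d ^ m)"
      unfolding tr_rho1_Id tr_rho1[of B] tr_rho1[of "M 1"] a_def g_def b1_def b2_def ..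
    finally show ?thesis .
  qed
  have "Re (\<Sum>j<2. of_real (ens_eta m d j) * tr ?ns (ens_rho m d j) (M j))
      = ens_eta m d 0 * Re (tr ?ns (ens_rho m d 0) (M 0)) + ens_eta m d 1 * g"
    by (simp add: numeral_2_eq_2 g_def ens_rho_def)
  also have "\<dots> \<le> ens_eta m d 0"
    unfolding t0 ens_eta_def using ineq1[of "real d ^ m" "real d" b1 b2 g a] b1 b2 ag d2 by simp
  finally show ?thesis .
qed

lemma pL_single: "pL (replicate m d) 2 (ens_eta m d) (ens_rho m d) = ens_eta m d 0"
  unfolding pL_def
proof (rule cSup_eq_maximum)
  let ?ns = "replicate m d"
  let ?M = "\<lambda>j. if j = 0 then idop ?ns else zeroop"
  have l: "locc_povm ?ns ?M" by (rule locc_povm.stop)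
  have "Re (\<Sum>j<2. of_real (ens_eta m d j) * tr ?ns (ens_rho m d j) (?M j)) = ens_eta m d 0"
    using tr_rho1_Id by (simp add: numeral_2_eq_2 zeroop_eq tr_zero2)
  note eq = this
  show "ens_eta m d 0 \<in> {Re (\<Sum>j<2. of_real (ens_eta m d j) * tr ?ns (ens_rho m d j) (M j)) |M. locc_povm ?ns M}"
  proof (rule CollectI, rule exI[of _ ?M], rule conjI)
    show "ens_eta m d 0 = Re (\<Sum>j<2. of_real (ens_eta m d j) * tr ?ns (ens_rho m d j) (?M j))"
      using eq by simp
    show "locc_povm ?ns ?M" by (rule l)
  qed
next
  fix x assume "x \<in> {Re (\<Sum>j<2. of_real (ens_eta m d j) * tr (replicate m d) (ens_rho m d j) (M j)) |M. locc_povm (replicate m d) M}"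
  then show "x \<le> ens_eta m d 0" using val_le by blast
qed

end



definition psi :: "nat \<Rightarrow> nat \<Rightarrow> complex" where
  "psi d a = (if a < d^2 \<and> a mod d = a div d then 1 else 0)"

definition Pr :: "nat \<Rightarrow> nat \<Rightarrow> nat \<Rightarrow> complex" where
  "Pr d x y = psi d x * psi d y / of_nat d"

definition emb :: "nat \<Rightarrow> nat list \<Rightarrow> nat list" where
  "emb d x = map (\<lambda>a. a * (d+1)) x"

lemma emb_digits:
  fixes a d :: nat
  assumes "a < d"
  shows "(a * (d+1)) mod d = a" "(a * (d+1)) div d = a" "a * (d+1) < d^2"
proof -
  have e: "a * (d+1) = a + d * a" by (simp add: mult.commute)
  show "(a * (d+1)) mod d = a" unfolding e using assms by simp
  show "(a * (d+1)) div d = a" unfolding e using assms by simp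
  have "a * (d+1) \<le> (d - 1) * (d + 1)" using assms by (intro mult_right_mono) auto
  also have "(d - 1) * (d + 1) < d^2" using assms by (cases d) (auto simp: power2_eq_square)
  finally show "a * (d+1) < d^2" .
qed

lemma psi_emb: "a < d \<Longrightarrow> psi d (a * (d+1)) = 1"
  using emb_digits[of a d] by (simp add: psi_def)

lemma psi_emb': "a < d \<Longrightarrow> psi d (a + a * d) = 1"
  using psi_emb[of a d] by (simp add: mult.commute)

lemma psi_nz:
  assumes "psi d a \<noteq> 0" "d > 0"
  shows "a = (a mod d) * (d+1)" "a mod d < d"
proof -
  have h: "a < d^2" "a mod d = a div d" using assms(1) by (auto simp: psi_def split: if_splits)
  have "a = a div d * d + a mod d" by simp
  then show "a = (a mod d) * (d+1)" using h by (simp add: algebra_simps)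
  show "a mod d < d" using assms by simp
qed

lemma valid_emb:
  assumes "d^2 \<le> N" "valid (replicate m d) x"
  shows "valid (replicate m N) (emb d x)"
proof -
  have "x!k * (d+1) < N" if "k < m" for k
  proof -
    have "x!k < d" using assms(2) that by (simp add: valid_def)
    then have "x!k * (d+1) < d^2" by (rule emb_digits(3))
    then show ?thesis using assms(1) by linarith
  qed
  then show ?thesis using assms(2) by (simp add: valid_def emb_def del: mult_Suc_right)
qed

lemma inj_emb: "inj_on (emb d) A"
proof -
  have i: "inj (\<lambda>a::nat. a * (d+1))"
  proof (rule injI)
    fix x y :: nat assume "x * (d+1) = y * (d+1)"
    then show "x = y" by (simp only: mult_cancel2) simp
  qed
  show ?thesis unfolding emb_def by (rule inj_onI) (metis inj_map_eq_map i)
qed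

lemma sum_emb:
  fixes F :: "nat list \<Rightarrow> 'a::comm_monoid_add"
  assumes "d^2 \<le> N" "d > 0"
    and z: "\<And>i. valid (replicate m N) i \<Longrightarrow> (\<exists>k<m. psi d (i!k) = 0) \<Longrightarrow> F i = 0"
  shows "(\<Sum>i\<in>idx (replicate m N). F i) = (\<Sum>x\<in>idx (replicate m d). F (emb d x))"
proof -
  let ?E = "emb d ` idx (replicate m d)"
  have sub: "?E \<subseteq> idx (replicate m N)" using valid_emb[OF assms(1)] by (auto simp: idx_def)
  have "(\<Sum>i\<in>idx (replicate m N). F i) = (\<Sum>i\<in>?E. F i)"
  proof (rule sum.mono_neutral_right[OF finite_idx sub], rule ballI)
    fix i assume i: "i \<in> idx (replicate m N) - ?E"
    then have v: "valid (replicate m N) i" by (simp add: idx_def)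
    have "\<exists>k<m. psi d (i!k) = 0"
    proof (rule ccontr)
      assume "\<not> (\<exists>k<m. psi d (i!k) = 0)"
      then have nz: "\<forall>k<m. psi d (i!k) \<noteq> 0" by blast
      define x where "x = map (\<lambda>a. a mod d) i"
      have lx: "length i = m" using v by (simp add: valid_def)
      have "valid (replicate m d) x" using lx assms(2) by (simp add: x_def valid_def)
      moreover have "emb d x = i"
        unfolding emb_def x_def
        by (rule nth_equalityI) (use lx nz psi_nz(1)[OF _ assms(2)] in auto)
      ultimately have "i \<in> ?E" by (auto simp: idx_def)
      then show False using i by blast
    qed
    then show "F i = 0" using z v by blast
  qed
  also have "\<dots> = (\<Sum>x\<in>idx (replicate m d). F (emb d x))"
    by (simp add: sum.reindex[OF inj_emb])
  finally show ?thesis .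
qed

lemma prodop_Pr_zero:
  assumes "k < m" "psi d (i!k) = 0"
  shows "prodop (replicate m N) (\<lambda>_. Pr d) j i = 0" "prodop (replicate m N) (\<lambda>_. Pr d) i j = 0"
  using assms by (auto simp: prodop_def Pr_def intro!: prod_zero bexI[of _ k])

lemma prodop_Pr_emb:
  assumes "d^2 \<le> N" "x \<in> idx (replicate m d)" "y \<in> idx (replicate m d)"
  shows "prodop (replicate m N) (\<lambda>_. Pr d) (emb d x) (emb d y) = 1 / of_nat d ^ m"
proof -
  have vx: "valid (replicate m N) (emb d x)" and vy: "valid (replicate m N) (emb d y)"
    using assms valid_emb by (auto simp: idx_def)
  have "(\<Prod>k<m. Pr d (emb d x ! k) (emb d y ! k)) = (\<Prod>k<m. 1 / of_nat d)"
  proof (intro prod.cong refl)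
    fix k assume "k \<in> {..<m}"
    then have "x!k < d" "y!k < d" "k < length x" "k < length y" using assms by (auto simp: idx_def valid_def)
    then show "Pr d (emb d x ! k) (emb d y ! k) = 1 / of_nat d"
      by (simp add: emb_def Pr_def psi_emb')
  qed
  then show ?thesis using vx vy by (simp add: prodop_def power_one_over)
qed

lemma tr_P:
  assumes "d^2 \<le> N" "d > 0"
  shows "tr (replicate m N) Y (prodop (replicate m N) (\<lambda>_. Pr d))
       = (\<Sum>x\<in>idx (replicate m d). \<Sum>y\<in>idx (replicate m d). Y (emb d x) (emb d y)) / of_nat d ^ m"
proof -
  let ?P = "prodop (replicate m N) (\<lambda>_. Pr d)"
  have "tr (replicate m N) Y ?P = (\<Sum>x\<in>idx (replicate m d). \<Sum>j\<in>idx (replicate m N). Y (emb d x) j * ?P j (emb d x))"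
    unfolding tr_def
    by (rule sum_emb[OF assms]) (use prodop_Pr_zero in auto)
  also have "\<dots> = (\<Sum>x\<in>idx (replicate m d). \<Sum>y\<in>idx (replicate m d). Y (emb d x) (emb d y) * ?P (emb d y) (emb d x))"
    by (intro sum.cong refl sum_emb[OF assms]) (use prodop_Pr_zero in auto)
  also have "\<dots> = (\<Sum>x\<in>idx (replicate m d). \<Sum>y\<in>idx (replicate m d). Y (emb d x) (emb d y) / of_nat d ^ m)"
    by (intro sum.cong refl) (simp add: prodop_Pr_emb[OF assms(1)])
  also have "\<dots> = (\<Sum>x\<in>idx (replicate m d). \<Sum>y\<in>idx (replicate m d). Y (emb d x) (emb d y)) / of_nat d ^ m"
    by (simp add: sum_divide_distrib)
  finally show ?thesis .
qed



lemma psi_set: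
  fixes d :: nat
  assumes "d > 0"
  shows "{a. a < d^2 \<and> a mod d = a div d} = (\<lambda>b. b * (d+1)) ` {..<d}"
proof
  show "{a. a < d^2 \<and> a mod d = a div d} \<subseteq> (\<lambda>b. b * (d+1)) ` {..<d}"
  proof
    fix a assume "a \<in> {a. a < d^2 \<and> a mod d = a div d}"
    then have "psi d a \<noteq> 0" by (simp add: psi_def)
    then have "a = (a mod d) * (d+1)" "a mod d < d" using psi_nz assms by auto
    then show "a \<in> (\<lambda>b. b * (d+1)) ` {..<d}" by blast
  qed
next
  show "(\<lambda>b. b * (d+1)) ` {..<d} \<subseteq> {a. a < d^2 \<and> a mod d = a div d}"
    using emb_digits by auto
qed

lemma sum_psi:
  assumes "d > 0" "d^2 \<le> N"
  shows "(\<Sum>a<N. psi d a * f a) = (\<Sum>b<d. f (b * (d+1)))"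
proof -
  let ?S = "{a. a < d^2 \<and> a mod d = a div d}"
  have sub: "?S \<subseteq> {..<N}" using assms by auto
  have "(\<Sum>a<N. psi d a * f a) = (\<Sum>a<N. if a \<in> ?S then f a else 0)"
    by (intro sum.cong refl) (simp add: psi_def)
  also have "\<dots> = (\<Sum>a\<in>?S. f a)" by (rule sum_restrict[OF sub finite_lessThan])
  also have "\<dots> = (\<Sum>b<d. f (b * (d+1)))"
  proof -
    have i: "inj_on (\<lambda>b::nat. b * Suc d) {..<d}"
    proof (rule inj_onI)
      fix x y :: nat assume "x * Suc d = y * Suc d"
      then show "x = y" by (simp only: mult_cancel2) simp
    qed
    show ?thesis unfolding psi_set[OF assms(1)] by (simp add: sum.reindex[OF i] del: mult_Suc_right)
  qed
  finally show ?thesis .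
qed

lemma emb_digits_Suc:
  fixes a d :: nat
  assumes "a < d"
  shows "a * Suc d mod d = a" "a * Suc d div d = a"
  using emb_digits[OF assms] by simp_all

lemma psi_sq: "psi d a * psi d a = psi d a" by (simp add: psi_def)
lemma cnj_psi: "cnj (psi d a) = psi d a" by (simp add: psi_def)

lemma sum_psi_sq:
  assumes "d > 0" "d^2 \<le> N"
  shows "(\<Sum>a<N. psi d a * psi d a) = of_nat d"
  using sum_psi[OF assms, of "\<lambda>_. 1"] by (simp add: psi_sq)

lemma density_Pr:
  assumes "d > 0"
  shows "density (d^2) (Pr d)"
  unfolding density_def
proof (intro conjI allI impI)
  fix a b assume "d^2 \<le> a \<or> d^2 \<le> b"
  then show "Pr d a b = 0" by (auto simp: Pr_def psi_def)
next
  fix v :: "nat \<Rightarrow> complex"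
  define s where "s = (\<Sum>b<d^2. psi d b * v b)"
  have "(\<Sum>a<d^2. \<Sum>b<d^2. cnj (v a) * Pr d a b * v b) = cnj s * s / of_nat d"
    by (simp add: s_def Pr_def sum_distrib_left sum_distrib_right sum_divide_distrib cnj_psi mult_ac)
  also have "\<dots> = of_real ((cmod s)^2) / of_nat d" by (simp only: complex_norm_square mult.commute)
  also have "\<dots> = of_real ((cmod s)^2 / real d)" by simp
  finally have e: "(\<Sum>a<d^2. \<Sum>b<d^2. cnj (v a) * Pr d a b * v b) = of_real ((cmod s)^2 / real d)" .
  show "Im (\<Sum>a<d^2. \<Sum>b<d^2. cnj (v a) * Pr d a b * v b) = 0" unfolding e by simp
  show "0 \<le> Re (\<Sum>a<d^2. \<Sum>b<d^2. cnj (v a) * Pr d a b * v b)" unfolding e by simp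
next
  have "(\<Sum>a<d^2. Pr d a a) = (\<Sum>a<d^2. psi d a * psi d a) / of_nat d"
    by (simp add: Pr_def sum_divide_distrib)
  also have "\<dots> = 1" using assms by (simp add: sum_psi_sq)
  finally show "(\<Sum>a<d^2. Pr d a a) = 1" .
qed

lemma sep_P:
  assumes "d > 0"
  shows "separable (replicate m (d^2)) (prodop (replicate m (d^2)) (\<lambda>_. Pr d))"
  unfolding separable_def
proof (intro exI conjI)
  show "\<forall>t::nat<1. 0 \<le> (\<lambda>_. 1::real) t" by simp
  show "(\<Sum>t::nat<1. (\<lambda>_. 1::real) t) = 1" by (simp add: lessThan_Suc)
  show "\<forall>t::nat<1. \<forall>k<length (replicate m (d^2)). density (replicate m (d^2) ! k) ((\<lambda>_ _. Pr d) t k)"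
    using density_Pr[OF assms] by simp
  show "prodop (replicate m (d^2)) (\<lambda>_. Pr d) = (\<lambda>i j. \<Sum>t::nat<1. of_real ((\<lambda>_. 1::real) t) * prodop (replicate m (d^2)) ((\<lambda>_ _. Pr d) t) i j)"
    by simp
qed

lemma map_emb_digits:
  assumes "x \<in> idx (replicate m d)"
  shows "map (\<lambda>a. a mod d) (emb d x) = x" "map (\<lambda>a. a div d mod d) (emb d x) = x"
proof -
  have "\<forall>k<length x. x!k < d" using assms by (simp add: idx_def valid_def)
  then show "map (\<lambda>a. a mod d) (emb d x) = x" "map (\<lambda>a. a div d mod d) (emb d x) = x"
    by (auto intro!: nth_equalityI simp: emb_def emb_digits_Suc simp del: mult_Suc_right)
qed

lemma idop_sym: "idop ns x y = idop ns y x" by (auto simp: idop_def)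
lemma GHZ_sym: "GHZ m d x y = GHZ m d y x" by (simp only: GHZ_Cs conj_commute)

lemma sum_sym_tr:
  assumes "\<And>x y. B x y = B y x"
  shows "(\<Sum>x\<in>idx ns. \<Sum>y\<in>idx ns. A x y * B x y) = tr ns A B"
  unfolding tr_def using assms by simp

lemma sum_sym_tr':
  assumes "\<And>x y. A x y = A y x"
  shows "(\<Sum>x\<in>idx ns. \<Sum>y\<in>idx ns. A x y * B x y) = tr ns B A"
  unfolding tr_def using assms by (simp add: mult.commute)

context
  fixes m d :: nat
  assumes m2: "m \<ge> 2" and d2: "d \<ge> 2"
begin

lemma tr_GHZ_GHZ: "tr (replicate m d) (GHZ m d) (GHZ m d) = 1"
proof -
  have m1: "m \<ge> 1" using m2 by simp
  have "tr (replicate m d) (GHZ m d) (GHZ m d) = (\<Sum>a<d. \<Sum>b<d. 1 / of_nat d) / of_nat d"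
    unfolding tr_GHZ1[OF m1] by (intro arg_cong2[where f="(/)"] sum.cong refl) (simp add: GHZ_def valid_def)
  also have "\<dots> = 1" using d2 by simp
  finally show ?thesis .
qed

lemma witness_not_bp: "\<not> block_positive (replicate m (d ^ 2)) (witness_op m d)"
proof
  assume bp: "block_positive (replicate m (d ^ 2)) (witness_op m d)"
  let ?ns = "replicate m d"
  let ?I = "Id_md m d" and ?G = "GHZ m d"
  have d0: "d > 0" using d2 by simp
  have "0 \<le> Re (tr (replicate m (d^2)) (witness_op m d) (prodop (replicate m (d^2)) (\<lambda>_. Pr d)))"
    using bp sep_P[OF d0] unfolding block_positive_def by blast
  moreover have "tr (replicate m (d^2)) (witness_op m d) (prodop (replicate m (d^2)) (\<lambda>_. Pr d))
      = (\<Sum>x\<in>idx ?ns. \<Sum>y\<in>idx ?ns. (?I x y - of_nat d * ?G x y) * (?I x y + of_nat d ^ m * ?G x y)) / of_nat d ^ m"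
    unfolding tr_P[OF order.refl d0]
    by (intro arg_cong2[where f="(/)"] sum.cong refl)
       (simp add: witness_op_def valid_emb[OF order.refl] idx_def map_emb_digits[unfolded idx_def])
  moreover have "(\<Sum>x\<in>idx ?ns. \<Sum>y\<in>idx ?ns. (?I x y - of_nat d * ?G x y) * (?I x y + of_nat d ^ m * ?G x y))
      = (\<Sum>x\<in>idx ?ns. \<Sum>y\<in>idx ?ns. ?I x y * ?I x y) + of_nat d ^ m * (\<Sum>x\<in>idx ?ns. \<Sum>y\<in>idx ?ns. ?I x y * ?G x y)
        - of_nat d * (\<Sum>x\<in>idx ?ns. \<Sum>y\<in>idx ?ns. ?G x y * ?I x y) - of_nat d * of_nat d ^ m * (\<Sum>x\<in>idx ?ns. \<Sum>y\<in>idx ?ns. ?G x y * ?G x y)"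
  proof -
    have "\<And>x y. (?I x y - of_nat d * ?G x y) * (?I x y + of_nat d ^ m * ?G x y)
       = ?I x y * ?I x y + of_nat d ^ m * (?I x y * ?G x y) - of_nat d * (?G x y * ?I x y) - of_nat d * of_nat d ^ m * (?G x y * ?G x y)"
      by (simp add: algebra_simps)
    then show ?thesis by (simp add: sum.distrib sum_subtractf sum_distrib_left)
  qed
  moreover have "(\<Sum>x\<in>idx ?ns. \<Sum>y\<in>idx ?ns. ?I x y * ?I x y) = of_nat (d ^ m)"
    using sum_sym_tr[where A="?I" and B="?I" and ns="?ns"] tr_Id_Id[OF m2 d2] by (simp add: Id_md_idop idop_sym)
  moreover have "(\<Sum>x\<in>idx ?ns. \<Sum>y\<in>idx ?ns. ?I x y * ?G x y) = 1"
    using sum_sym_tr'[where A="?I" and B="?G" and ns="?ns"] tr_GHZ_Id[OF m2 d2] by (simp add: Id_md_idop idop_sym)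
  moreover have "(\<Sum>x\<in>idx ?ns. \<Sum>y\<in>idx ?ns. ?G x y * ?I x y) = 1"
    using sum_sym_tr[where B="?I" and A="?G" and ns="?ns"] tr_GHZ_Id[OF m2 d2] by (simp add: Id_md_idop idop_sym)
  moreover have "(\<Sum>x\<in>idx ?ns. \<Sum>y\<in>idx ?ns. ?G x y * ?G x y) = 1"
    using sum_sym_tr[where B="?G" and A="?G" and ns="?ns"] tr_GHZ_GHZ by (simp add: GHZ_sym)
  ultimately have "0 \<le> Re ((of_nat (d^m) + of_nat d ^ m * 1 - of_nat d * 1 - of_nat d * of_nat d ^ m * 1) / of_nat d ^ m)"
    by simp
  then have h1: "0 \<le> (real d ^ m + real d ^ m - real d - real d * real d ^ m) / real d ^ m"
    by (simp del: of_nat_power add: of_nat_power[symmetric] Re_divide_of_nat)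
  have h2: "real d ^ m + real d ^ m - real d - real d * real d ^ m < 0"
  proof -
    have "2 * real d ^ m \<le> real d * real d ^ m" using d2 by (intro mult_right_mono) auto
    moreover have "real d \<ge> 2" using d2 by simp
    ultimately show ?thesis by linarith
  qed
  have h3: "real d ^ m > 0" using d0 by simp
  have "(real d ^ m + real d ^ m - real d - real d * real d ^ m) / real d ^ m < 0"
    by (rule divide_neg_pos[OF h2 h3])
  with h1 show False by linarith
qed

end



lemma digit_sum:
  fixes G :: "nat \<Rightarrow> nat list \<Rightarrow> 'a::comm_semiring_1"
  assumes "d > 0"
  shows "(\<Sum>i\<in>idx (replicate m (d^L)). \<Prod>l<L. G l (map (\<lambda>a. a div d^l mod d) i))
       = (\<Prod>l<L. \<Sum>x\<in>idx (replicate m d). G l x)"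
proof (induction L arbitrary: G)
  case 0
  have "(\<Sum>i\<in>idx (replicate m (d^0)). \<Prod>l<0. G l (map (\<lambda>a. a div d^l mod d) i)) = of_nat (card (idx (replicate m (d^0))))"
    by simp
  also have "\<dots> = 1" by (simp add: card_idx_rep)
  finally show ?case by simp
next
  case (Suc L)
  let ?S = "idx (replicate m (d^Suc L))"
  let ?T = "idx (replicate m d) \<times> idx (replicate m (d^L))"
  let ?phi = "\<lambda>(x, y). map (\<lambda>k. x!k + d * y!k) [0..<m]"
  let ?psi = "\<lambda>i. (map (\<lambda>a. a mod d) i, map (\<lambda>a. a div d) i)"
  let ?h = "\<lambda>(x, y). G 0 x * (\<Prod>l<L. G (Suc l) (map (\<lambda>a. a div d^l mod d) y))"
  have dl: "0 < d^L" using assms by simp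
  have "(\<Sum>i\<in>?S. \<Prod>l<Suc L. G l (map (\<lambda>a. a div d^l mod d) i)) = (\<Sum>p\<in>?T. ?h p)"
  proof (rule sum.reindex_bij_witness[where i="?phi" and j="?psi"])
    fix i assume "i \<in> ?S"
    then have v: "length i = m" "\<forall>k<m. i!k < d^Suc L" by (auto simp: idx_def valid_def)
    show "?phi (?psi i) = i" using v by (auto intro!: nth_equalityI)
    show "?psi i \<in> ?T"
    proof -
      have "i!k div d < d^L" if "k < m" for k
        using v that by (auto simp: less_mult_imp_div_less mult.commute)
      then show ?thesis using v assms by (auto simp: idx_def valid_def)
    qed
    have e0: "map (\<lambda>a. a div d^0 mod d) i = map (\<lambda>a. a mod d) i" by simp
    have eS: "map (\<lambda>a. a div d^Suc l mod d) i = map (\<lambda>a. a div d^l mod d) (map (\<lambda>a. a div d) i)" for l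
      by (simp add: div_mult2_eq)
    show "?h (?psi i) = (\<Prod>l<Suc L. G l (map (\<lambda>a. a div d^l mod d) i))"
      by (simp only: prod.lessThan_Suc_shift e0 eS) simp
  next
    fix p assume "p \<in> ?T"
    then obtain x y where p: "p = (x, y)" and x: "valid (replicate m d) x" and y: "valid (replicate m (d^L)) y"
      by (auto simp: idx_def)
    have lx: "length x = m" "\<forall>k<m. x!k < d" using x by (auto simp: valid_def)
    have ly: "length y = m" "\<forall>k<m. y!k < d^L" using y by (auto simp: valid_def)
    show "?psi (?phi p) = p" unfolding p using lx ly by (auto intro!: nth_equalityI)
    have "x!k + d * y!k < d^Suc L" if "k < m" for k
    proof -
      have "x!k + d * y!k < d + d * y!k" using lx that by simp
      also have "\<dots> = d * (y!k + 1)" by (simp add: algebra_simps)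
      also have "\<dots> \<le> d * d^L" using ly that by (intro mult_left_mono) auto
      finally show ?thesis by simp
    qed
    then show "?phi p \<in> ?S" unfolding p by (auto simp: idx_def valid_def)
  qed
  also have "\<dots> = (\<Sum>x\<in>idx (replicate m d). G 0 x) * (\<Sum>y\<in>idx (replicate m (d^L)). \<Prod>l<L. G (Suc l) (map (\<lambda>a. a div d^l mod d) y))"
    by (simp add: sum_product sum.cartesian_product)
  also have "\<dots> = (\<Sum>x\<in>idx (replicate m d). G 0 x) * (\<Prod>l<L. \<Sum>x\<in>idx (replicate m d). G (Suc l) x)"
    using Suc.IH[of "\<lambda>l. G (Suc l)"] by simp
  also have "\<dots> = (\<Prod>l<Suc L. \<Sum>x\<in>idx (replicate m d). G l x)"
    by (simp only: prod.lessThan_Suc_shift)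
  finally show ?case .
qed



definition Kr :: "nat \<Rightarrow> nat \<Rightarrow> nat \<Rightarrow> nat \<Rightarrow> complex" where
  "Kr d r a x = (if r = 0 then Pr d a x else delta a x - Pr d a x)"

definition stopop :: "nat list \<Rightarrow> nat \<Rightarrow> nat \<Rightarrow> op" where
  "stopop ns j0 = (\<lambda>j. if j = j0 then idop ns else zeroop)"

fun prot :: "nat list \<Rightarrow> nat \<Rightarrow> nat \<Rightarrow> nat \<Rightarrow> nat \<Rightarrow> op" where
  "prot ns d m 0 = stopop ns 1"
| "prot ns d m (Suc n) = (\<lambda>j i i'. \<Sum>r<2. conj_local ns (m - Suc n) (ns ! (m - Suc n)) (Kr d r)
                         ((if r = 0 then prot ns d m n else stopop ns 0) j) i i')"

lemma cnj_delta: "cnj (delta a x) = delta a x" by (simp add: delta_def)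
lemma cnj_Pr: "cnj (Pr d a x) = Pr d a x" by (simp add: Pr_def cnj_psi)
lemma Pr_sym: "Pr d a x = Pr d x a" by (simp add: Pr_def mult.commute)

lemma PrPr:
  assumes "d > 0" "d^2 \<le> N"
  shows "(\<Sum>a<N. Pr d a x * Pr d a y) = Pr d x y"
proof -
  have "(\<Sum>a<N. Pr d a x * Pr d a y) = (\<Sum>a<N. psi d a * psi d a) * (psi d x * psi d y / (of_nat d * of_nat d))"
  proof -
    have e: "\<And>a. Pr d a x * Pr d a y = psi d a * psi d a * (psi d x * psi d y / (of_nat d * of_nat d))"
      by (simp add: Pr_def)
    show ?thesis by (simp only: e) (rule sum_distrib_right[symmetric])
  qed
  also have "\<dots> = Pr d x y" using assms by (simp add: sum_psi_sq Pr_def)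
  finally show ?thesis .
qed

lemma Kr_complete:
  assumes "d > 0" "d^2 \<le> N" "x < N" "y < N"
  shows "(\<Sum>r<2. \<Sum>a<N. cnj (Kr d r a x) * Kr d r a y) = (if x = y then 1 else 0)"
proof -
  have e1: "\<And>a. delta a x * delta a y = (if a = x then delta x y else 0)" by (simp add: delta_def)
  have e2: "\<And>a. delta a x * Pr d a y = (if a = x then Pr d x y else 0)" by (simp add: delta_def)
  have e3: "\<And>a. Pr d a x * delta a y = (if a = y then Pr d x y else 0)" by (simp add: delta_def Pr_sym)
  have s1: "(\<Sum>a<N. delta a x * delta a y) = delta x y" using assms by (simp only: e1 sum.delta finite_lessThan) simp
  have s2: "(\<Sum>a<N. delta a x * Pr d a y) = Pr d x y" using assms by (simp only: e2 sum.delta finite_lessThan) simp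
  have s3: "(\<Sum>a<N. Pr d a x * delta a y) = Pr d x y" using assms by (simp only: e3 sum.delta finite_lessThan) simp
  have "(\<Sum>r<2. \<Sum>a<N. cnj (Kr d r a x) * Kr d r a y)
      = (\<Sum>a<N. Pr d a x * Pr d a y) + (\<Sum>a<N. (delta a x - Pr d a x) * (delta a y - Pr d a y))"
    by (simp add: numeral_2_eq_2 Kr_def cnj_Pr cnj_delta)
  also have "(\<Sum>a<N. (delta a x - Pr d a x) * (delta a y - Pr d a y))
      = (\<Sum>a<N. delta a x * delta a y) - (\<Sum>a<N. delta a x * Pr d a y) - (\<Sum>a<N. Pr d a x * delta a y) + (\<Sum>a<N. Pr d a x * Pr d a y)"
    by (simp add: algebra_simps sum.distrib sum_subtractf)
  finally show ?thesis using PrPr[OF assms(1,2)] s1 s2 s3 by (simp add: delta_def)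
qed

context
  fixes m d N :: nat
  assumes m0: "m > 0" and d0: "d > 0" and dN: "d^2 \<le> N"
begin


lemma prot_locc: "locc_povm (replicate m N) (prot (replicate m N) d m n)"
proof (induction n)
  case 0
  show ?case unfolding prot.simps stopop_def by (rule locc_povm.stop)
next
  case (Suc n)
  let ?ns = "replicate m N"
  let ?k = "m - Suc n"
  have k: "?k < length ?ns" using m0 by simp
  have "locc_povm ?ns (\<lambda>j i i'. \<Sum>r<2. conj_local ?ns ?k (?ns ! ?k) (Kr d r)
                         ((\<lambda>r. if r = 0 then prot ?ns d m n else stopop ?ns 0) r j) i i')"
  proof (rule locc_povm.step[OF k])
    show "(0::nat) < 2" by simp
    show "0 < ?ns ! ?k" using k d0 dN by simp (metis le0 less_le_trans not_le power_eq_0_iff zero_less_power2 neq0_conv)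
    show "\<forall>x<?ns ! ?k. \<forall>y<?ns ! ?k. (\<Sum>r<2. \<Sum>a<?ns ! ?k. cnj (Kr d r a x) * Kr d r a y) = (if x = y then 1 else 0)"
      using k Kr_complete[OF d0 dN] by simp
    show "\<forall>r<2. locc_povm (?ns[?k := ?ns ! ?k]) ((\<lambda>r. if r = 0 then prot ?ns d m n else stopop ?ns 0) r)"
      using Suc locc_povm.stop[of ?ns 0] by (simp add: stopop_def)
  qed
  then show ?case by simp
qed

definition gg :: "nat \<Rightarrow> nat \<Rightarrow> nat \<Rightarrow> nat \<Rightarrow> complex" where
  "gg n k = (if k < m - n then delta else Pr d)"

lemma conj_prodop': "k < length ns \<Longrightarrow> conj_local ns k (ns!k) K (prodop ns f)
       = prodop ns (f(k := (\<lambda>x y. \<Sum>a<ns!k. \<Sum>b<ns!k. cnj (K a x) * f k a b * K b y)))"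
  using conj_prodop[of k ns "ns!k" K f] by simp

lemma conj_idop': "k < length ns \<Longrightarrow> conj_local ns k (ns!k) K (idop ns) = conj_local ns k (ns!k) K (idop (ns[k := ns!k]))"
  by simp

lemma prot_vals:
  assumes "n \<le> m"
  shows "prot (replicate m N) d m n 1 = prodop (replicate m N) (gg n)
       \<and> prot (replicate m N) d m n 0 = (\<lambda>i j. idop (replicate m N) i j - prodop (replicate m N) (gg n) i j)
       \<and> (\<forall>j. j \<noteq> 0 \<longrightarrow> j \<noteq> 1 \<longrightarrow> prot (replicate m N) d m n j = zeroop)"
  using assms
proof (induction n)
  case 0
  have g0: "prodop (replicate m N) (gg 0) = idop (replicate m N)"
    unfolding idop_prodop by (rule prodop_cong) (simp add: gg_def)
  show ?case by (auto simp: stopop_def g0 zeroop_def intro!: ext)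
next
  case (Suc n)
  let ?ns = "replicate m N"
  let ?k = "m - Suc n"
  have k: "?k < length ?ns" using m0 by simp
  have nk: "?ns ! ?k = N" using k by simp
  have IH: "prot ?ns d m n 1 = prodop ?ns (gg n)"
     "prot ?ns d m n 0 = (\<lambda>i j. idop ?ns i j - prodop ?ns (gg n) i j)"
     "\<And>j. j \<noteq> 0 \<Longrightarrow> j \<noteq> 1 \<Longrightarrow> prot ?ns d m n j = zeroop" using Suc by auto
  have ps: "prot ?ns d m (Suc n) j i i' = conj_local ?ns ?k N (Kr d 0) (prot ?ns d m n j) i i'
            + conj_local ?ns ?k N (Kr d 1) (stopop ?ns 0 j) i i'" for j i i'
    by (simp add: numeral_2_eq_2 nk)
  have cz: "conj_local ?ns ?k N K zeroop = zeroop" for K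
    by (simp add: zeroop_eq conj_zero)
  have "?k < m - n" using Suc.prems by arith
  then have gk: "gg n ?k = delta" by (simp add: gg_def)
  have gsuc: "(gg n)(?k := Pr d) = gg (Suc n)"
    by (intro ext) (auto simp: gg_def)
  have c1: "conj_local ?ns ?k N (Kr d 0) (prodop ?ns (gg n)) = prodop ?ns (gg (Suc n))"
  proof -
    have "conj_local ?ns ?k N (Kr d 0) (prodop ?ns (gg n))
       = prodop ?ns ((gg n)(?k := (\<lambda>x y. \<Sum>a<N. \<Sum>b<N. cnj (Kr d 0 a x) * gg n ?k a b * Kr d 0 b y)))"
      using conj_prodop'[OF k, of "Kr d 0" "gg n"] nk by simp
    also have "(\<lambda>x y. \<Sum>a<N. \<Sum>b<N. cnj (Kr d 0 a x) * gg n ?k a b * Kr d 0 b y) = Pr d"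
    proof (intro ext)
      fix x y
      have "(\<Sum>a<N. \<Sum>b<N. cnj (Kr d 0 a x) * gg n ?k a b * Kr d 0 b y) = (\<Sum>a<N. Pr d a x * Pr d a y)"
      proof (intro sum.cong refl)
        fix a assume a: "a \<in> {..<N}"
        have e: "\<And>b. cnj (Kr d 0 a x) * gg n ?k a b * Kr d 0 b y = (if b = a then Pr d a x * Pr d a y else 0)"
          by (simp add: gk Kr_def cnj_Pr delta_def)
        show "(\<Sum>b<N. cnj (Kr d 0 a x) * gg n ?k a b * Kr d 0 b y) = Pr d a x * Pr d a y"
          using a by (simp only: e sum.delta finite_lessThan) simp
      qed
      then show "(\<Sum>a<N. \<Sum>b<N. cnj (Kr d 0 a x) * gg n ?k a b * Kr d 0 b y) = Pr d x y"
        using PrPr[OF d0 dN] by simp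
    qed
    finally show ?thesis using gsuc by simp
  qed
  have kc: "conj_local ?ns ?k N (Kr d 0) (idop ?ns) i j + conj_local ?ns ?k N (Kr d 1) (idop ?ns) i j = idop ?ns i j" for i j
  proof -
    have "(\<Sum>r<2. conj_local ?ns ?k N (Kr d r) (idop (?ns[?k := N])) i j) = idop ?ns i j"
      by (rule kraus_complete[OF k]) (use Kr_complete[OF d0 dN] nk in simp)
    moreover have upd: "?ns[?k := N] = ?ns" by (metis list_update_id nk)
    ultimately show ?thesis by (simp add: numeral_2_eq_2 nk)
  qed
  show ?case
  proof (intro conjI allI impI)
    show "prot ?ns d m (Suc n) 1 = prodop ?ns (gg (Suc n))"
      by (intro ext) (simp only: ps IH(1), simp add: stopop_def cz c1 zeroop_def)
    show "prot ?ns d m (Suc n) 0 = (\<lambda>i j. idop ?ns i j - prodop ?ns (gg (Suc n)) i j)"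
    proof (intro ext)
      fix i j
      have "prot ?ns d m (Suc n) 0 i j = conj_local ?ns ?k N (Kr d 0) (idop ?ns) i j
            - conj_local ?ns ?k N (Kr d 0) (prodop ?ns (gg n)) i j + conj_local ?ns ?k N (Kr d 1) (idop ?ns) i j"
        by (simp only: ps IH(2), simp add: stopop_def conj_diff)
      also have "\<dots> = idop ?ns i j - prodop ?ns (gg (Suc n)) i j"
        using kc[of i j] c1 by simp
      finally show "prot ?ns d m (Suc n) 0 i j = idop ?ns i j - prodop ?ns (gg (Suc n)) i j" .
    qed
    fix j :: nat assume "j \<noteq> 0" "j \<noteq> 1"
    then show "prot ?ns d m (Suc n) j = zeroop"
      by (intro ext) (simp only: ps, simp add: IH stopop_def cz zeroop_def)
  qed
qed

lemma gg_m: "gg m = (\<lambda>_. Pr d)" by (intro ext) (simp add: gg_def)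

end



lemma entry_le1:
  assumes "locc_povm ns M" "i \<in> idx ns" "j \<in> idx ns"
  shows "cmod (M c i j) \<le> 1"
proof -
  have c1: "cone ns (M c)" using locc_cone[OF assms(1), of "{c}"] by simp
  have c2: "cone ns (\<lambda>i j. idop ns i j - M c i j)" using locc_cone[OF assms(1), of "{c}"] by simp
  have "Re (idop ns i i - M c i i) \<ge> 0" "Re (idop ns j j - M c j j) \<ge> 0"
    using cone_diag[OF c2, of i i] cone_diag[OF c2, of j j] by auto
  moreover have "idop ns i i = 1" "idop ns j j = 1" using assms by (auto simp: idop_def idx_def)
  ultimately have "Re (M c i i) \<le> 1" "Re (M c j j) \<le> 1" by auto
  moreover have "cmod (M c i j) \<le> (Re (M c i i) + Re (M c j j)) / 2" using cone_diag[OF c1, of i j] by blast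
  moreover have "(Re (M c i i) + Re (M c j j)) / 2 \<le> 1" using \<open>Re (M c i i) \<le> 1\<close> \<open>Re (M c j j) \<le> 1\<close> by simp
  ultimately show ?thesis by linarith
qed

lemma dsum_lin2:
  fixes a b :: complex
  shows "(\<Sum>x\<in>A. \<Sum>y\<in>B. a * f x y + b * g x y) = a * (\<Sum>x\<in>A. \<Sum>y\<in>B. f x y) + b * (\<Sum>x\<in>A. \<Sum>y\<in>B. g x y)"
  by (simp add: sum.distrib sum_distrib_left)

lemma dsum_lin4:
  fixes a b c e :: complex
  shows "(\<Sum>x\<in>A. \<Sum>y\<in>B. a * f x y + b * g x y + c * h x y + e * k x y)
   = a * (\<Sum>x\<in>A. \<Sum>y\<in>B. f x y) + b * (\<Sum>x\<in>A. \<Sum>y\<in>B. g x y) + c * (\<Sum>x\<in>A. \<Sum>y\<in>B. h x y) + e * (\<Sum>x\<in>A. \<Sum>y\<in>B. k x y)"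
  by (simp add: sum.distrib sum_distrib_left)

lemma tr_bound:
  assumes "\<And>i j. i \<in> idx ns \<Longrightarrow> j \<in> idx ns \<Longrightarrow> cmod (X j i) \<le> 1"
  shows "cmod (tr ns Y X) \<le> (\<Sum>i\<in>idx ns. \<Sum>j\<in>idx ns. cmod (Y i j))"
proof -
  have "cmod (tr ns Y X) \<le> (\<Sum>i\<in>idx ns. cmod (\<Sum>j\<in>idx ns. Y i j * X j i))"
    unfolding tr_def by (rule norm_sum)
  also have "\<dots> \<le> (\<Sum>i\<in>idx ns. \<Sum>j\<in>idx ns. cmod (Y i j))"
  proof (rule sum_mono)
    fix i assume i: "i \<in> idx ns"
    have "cmod (\<Sum>j\<in>idx ns. Y i j * X j i) \<le> (\<Sum>j\<in>idx ns. cmod (Y i j * X j i))" by (rule norm_sum)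
    also have "\<dots> \<le> (\<Sum>j\<in>idx ns. cmod (Y i j))"
      using assms i by (intro sum_mono) (auto simp: norm_mult intro: mult_left_le)
    finally show "cmod (\<Sum>j\<in>idx ns. Y i j * X j i) \<le> (\<Sum>j\<in>idx ns. cmod (Y i j))" .
  qed
  finally show ?thesis .
qed

lemma val_bound:
  assumes "locc_povm ns M"
  shows "Re (\<Sum>c<K. of_real (eta c) * tr ns (rho c) (M c))
       \<le> (\<Sum>c<K. \<bar>eta c\<bar> * (\<Sum>i\<in>idx ns. \<Sum>j\<in>idx ns. cmod (rho c i j)))"
proof -
  have "Re (\<Sum>c<K. of_real (eta c) * tr ns (rho c) (M c)) \<le> cmod (\<Sum>c<K. of_real (eta c) * tr ns (rho c) (M c))"
    by (rule complex_Re_le_cmod)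
  also have "\<dots> \<le> (\<Sum>c<K. cmod (of_real (eta c) * tr ns (rho c) (M c)))" by (rule norm_sum)
  also have "\<dots> \<le> (\<Sum>c<K. \<bar>eta c\<bar> * (\<Sum>i\<in>idx ns. \<Sum>j\<in>idx ns. cmod (rho c i j)))"
  proof (rule sum_mono)
    fix c
    have "cmod (tr ns (rho c) (M c)) \<le> (\<Sum>i\<in>idx ns. \<Sum>j\<in>idx ns. cmod (rho c i j))"
      by (rule tr_bound) (rule entry_le1[OF assms])
    then show "cmod (of_real (eta c) * tr ns (rho c) (M c)) \<le> \<bar>eta c\<bar> * (\<Sum>i\<in>idx ns. \<Sum>j\<in>idx ns. cmod (rho c i j))"
      by (simp add: norm_mult mult_left_mono)
  qed
  finally show ?thesis .
qed

lemma emb_dig: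
  assumes "x \<in> idx (replicate m d)" "d > 0"
  shows "map (\<lambda>a. a div d^l mod d) (emb d x) = (if l < 2 then x else replicate m 0)"
proof -
  have lx: "length x = m" and xl: "\<forall>k<m. x!k < d" using assms by (auto simp: idx_def valid_def)
  have "x!k * Suc d div d^l mod d = (if l < 2 then x!k else 0)" if "k < m" for k
  proof -
    have a: "x!k < d" using xl that by simp
    consider "l = 0" | "l = 1" | "l \<ge> 2" by linarith
    then show ?thesis
    proof cases
      case 1 then show ?thesis using emb_digits_Suc[OF a] a by simp
    next
      case 2 then show ?thesis using emb_digits_Suc[OF a] a by simp
    next
      case 3
      have "x!k * Suc d < d^2" using emb_digits(3)[OF a] by simp
      also have "d^2 \<le> d^l" using 3 assms(2) by (intro power_increasing) auto
      finally show ?thesis using 3 by simp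
    qed
  qed
  then show ?thesis using lx by (auto intro!: nth_equalityI simp: emb_def simp del: mult_Suc_right)
qed

context
  fixes m d :: nat
  assumes m2: "m \<ge> 2" and d2: "d \<ge> 2"
begin

lemma sII: "(\<Sum>x\<in>idx (replicate m d). \<Sum>y\<in>idx (replicate m d). Id_md m d x y * Id_md m d x y) = of_nat (d ^ m)"
  using sum_sym_tr[where A="Id_md m d" and B="Id_md m d" and ns="replicate m d"] tr_Id_Id[OF m2 d2]
  by (simp add: Id_md_idop idop_sym)

lemma sIG: "(\<Sum>x\<in>idx (replicate m d). \<Sum>y\<in>idx (replicate m d). Id_md m d x y * GHZ m d x y) = 1"
  using sum_sym_tr'[where A="Id_md m d" and B="GHZ m d" and ns="replicate m d"] tr_GHZ_Id[OF m2 d2]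
  by (simp add: Id_md_idop idop_sym)

lemma sGI: "(\<Sum>x\<in>idx (replicate m d). \<Sum>y\<in>idx (replicate m d). GHZ m d x y * Id_md m d x y) = 1"
  using sum_sym_tr[where B="Id_md m d" and A="GHZ m d" and ns="replicate m d"] tr_GHZ_Id[OF m2 d2]
  by (simp add: Id_md_idop idop_sym)

lemma sGG: "(\<Sum>x\<in>idx (replicate m d). \<Sum>y\<in>idx (replicate m d). GHZ m d x y * GHZ m d x y) = 1"
  using sum_sym_tr[where B="GHZ m d" and A="GHZ m d" and ns="replicate m d"] tr_GHZ_GHZ[OF m2 d2]
  by (simp add: GHZ_sym)

lemma rho1_c: "tr (replicate m d) (ens_rho m d 0) (idop (replicate m d)) = 1"
proof -
  have "tr (replicate m d) (ens_rho m d 0) (idop (replicate m d))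
     = (1 / (2 * of_nat d ^ m)) * (tr (replicate m d) (Id_md m d) (idop (replicate m d)) + of_nat d ^ m * tr (replicate m d) (GHZ m d) (idop (replicate m d)))"
    by (simp only: ens_rho0[OF m2 d2] tr_lin1p)
  also have "\<dots> = 1" using d2 by (simp add: tr_Id_Id[OF m2 d2] tr_GHZ_Id[OF m2 d2])
  finally show ?thesis .
qed

lemma S00: "(\<Sum>x\<in>idx (replicate m d). \<Sum>y\<in>idx (replicate m d). ens_rho m d 0 x y * ens_rho m d 0 x y)
   = (1 / (2 * of_nat d ^ m))^2 * (of_nat d ^ m + of_nat d ^ m + of_nat d ^ m + (of_nat d ^ m)^2)"
proof -
  let ?c = "1 / (2 * (of_nat d ^ m :: complex))" and ?P = "of_nat d ^ m :: complex"
  let ?I = "Id_md m d" and ?G = "GHZ m d"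
  have e: "\<And>x y. ens_rho m d 0 x y * ens_rho m d 0 x y = ?c^2 * (?I x y * ?I x y) + ?c^2 * ?P * (?I x y * ?G x y)
     + ?c^2 * ?P * (?G x y * ?I x y) + ?c^2 * ?P^2 * (?G x y * ?G x y)"
    by (simp add: ens_rho0[OF m2 d2] algebra_simps power2_eq_square)
  show ?thesis by (simp only: e dsum_lin4 sII sIG sGI sGG) (simp add: algebra_simps power2_eq_square)
qed

lemma S10: "(\<Sum>x\<in>idx (replicate m d). \<Sum>y\<in>idx (replicate m d). GHZ m d x y * ens_rho m d 0 x y)
   = (1 / (2 * of_nat d ^ m)) * (1 + of_nat d ^ m)"
proof -
  let ?c = "1 / (2 * (of_nat d ^ m :: complex))" and ?P = "of_nat d ^ m :: complex"
  let ?I = "Id_md m d" and ?G = "GHZ m d"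
  have e: "\<And>x y. GHZ m d x y * ens_rho m d 0 x y = ?c * (?G x y * ?I x y) + ?c * ?P * (?G x y * ?G x y)"
    by (simp add: ens_rho0[OF m2 d2] algebra_simps)
  show ?thesis using d2 by (simp only: e dsum_lin2 sGI sGG) (simp add: field_simps)
qed

lemma q_val: "ens_rho m d 0 (replicate m 0) (replicate m 0) = (1 / (2 * of_nat d ^ m)) * (1 + of_nat d ^ m / of_nat d)"
proof -
  have v: "valid (replicate m d) (replicate m 0)" using d2 by (simp add: valid_def)
  show ?thesis using v by (simp add: ens_rho0[OF m2 d2] Id_md_idop idop_def GHZ_def)
qed

end



lemma fin_ineq:
  fixes dd P :: real and L2 :: nat
  assumes dd: "dd \<ge> 2" and P: "P \<ge> 1"
  shows "(2*P/(dd+3*P))^(Suc (Suc L2)) <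
     (2*P/(dd+3*P))^(Suc (Suc L2)) * (1 - ((1/(2*P)) * (1 + P/dd))^L2 * ((1/(2*P))^2 * (P+P+P+P^2)) / P)
     + ((dd+P)/(dd+3*P) * (2*P/(dd+3*P))^(Suc L2)) * (((1/(2*P)) * (1 + P/dd))^L2 * ((1/(2*P)) * (1+P)) / P)"
proof -
  define e1 where "e1 = 2*P/(dd+3*P)"
  define e2 where "e2 = (dd+P)/(dd+3*P)"
  define c0 where "c0 = 1/(2*P)"
  define qr where "qr = c0 * (1 + P/dd)"
  have D: "dd + 3*P > 0" using dd P by simp
  have e1p: "e1 > 0" unfolding e1_def using D P by simp
  have c0p: "c0 > 0" unfolding c0_def using P by simp
  have qrp: "qr > 0" unfolding qr_def using c0p dd P by (simp add: add_pos_pos)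
  define K where "K = e1^(Suc L2) * qr^L2 / P"
  have Kp: "K > 0" unfolding K_def using e1p qrp P by simp
  have inner: "e2*(c0*(1+P)) - e1*(c0^2*(P+P+P+P^2)) = c0 * (dd + dd*P - 2*P)/(dd+3*P)"
  proof -
    have "c0^2*(P+P+P+P^2) = c0 * ((3+P)/2)" unfolding c0_def using P by (simp add: field_simps power2_eq_square)
    then have "e2*(c0*(1+P)) - e1*(c0^2*(P+P+P+P^2)) = e2*(c0*(1+P)) - e1*(c0 * ((3+P)/2))" by (simp only:)
    also have "\<dots> = c0 * (e2*(1+P) - e1*((3+P)/2))" by (simp add: algebra_simps)
    also have "e2*(1+P) - e1*((3+P)/2) = ((dd+P)*(1+P) - P*(3+P))/(dd+3*P)"
    proof -
      have a: "e2*(1+P) = ((dd+P)*(1+P))/(dd+3*P)" unfolding e2_def by simp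
      have b: "e1*((3+P)/2) = (P*(3+P))/(dd+3*P)" unfolding e1_def using D by (simp add: field_simps)
      show ?thesis unfolding a b by (rule diff_divide_distrib[symmetric])
    qed
    also have "(dd+P)*(1+P) - P*(3+P) = dd + dd*P - 2*P" by (simp add: algebra_simps)
    finally show ?thesis by simp
  qed
  have ip: "c0 * (dd + dd*P - 2*P)/(dd+3*P) > 0"
  proof -
    have "dd*P \<ge> 2*P" using dd P by (intro mult_right_mono) auto
    then have "dd + dd*P - 2*P > 0" using dd by linarith
    then show ?thesis using c0p D by simp
  qed
  have eq: "e1^(Suc (Suc L2)) * (1 - qr^L2 * (c0^2*(P+P+P+P^2)) / P) + (e2 * e1^(Suc L2)) * (qr^L2 * (c0*(1+P)) / P)
      = e1^(Suc (Suc L2)) + K * (e2*(c0*(1+P)) - e1*(c0^2*(P+P+P+P^2)))"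
    unfolding K_def using P by (simp add: field_simps)
  have "e1^(Suc (Suc L2)) < e1^(Suc (Suc L2)) + K * (e2*(c0*(1+P)) - e1*(c0^2*(P+P+P+P^2)))"
  proof -
    have "0 < K * (c0 * (dd + dd*P - 2*P)/(dd+3*P))" using Kp ip by (rule mult_pos_pos)
    then show ?thesis unfolding inner by simp
  qed
  then show ?thesis using eq unfolding e1_def e2_def c0_def qr_def by simp
qed



lemma one_div_pow: "(1::nat) div 2 ^ Suc n = 0"
proof -
  have "(1::nat) < 2^Suc n" by (rule one_less_power) simp_all
  then show ?thesis by (rule div_less)
qed

lemma part2:
  fixes m d L :: nat
  assumes m2: "m \<ge> 2" and d2: "d \<ge> 2" and L2: "L \<ge> 2"
  shows "ens_eta m d 0 ^ L <
           pL (replicate m (d ^ L)) (2 ^ L)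
              (seq_eta 2 L (\<lambda>l. ens_eta m d)) (seq_rho m d 2 L (\<lambda>l. ens_rho m d))"
proof -
  obtain L' where L: "L = Suc (Suc L')" using L2 by (metis add_2_eq_Suc le_Suc_ex add.commute)
  let ?ns = "replicate m (d^L)"
  let ?eta = "seq_eta 2 L (\<lambda>l. ens_eta m d)"
  let ?rho = "seq_rho m d 2 L (\<lambda>l. ens_rho m d)"
  have d0: "d > 0" and m0: "m > 0" using d2 m2 by auto
  have dN: "d^2 \<le> d^L" using d0 L2 by (intro power_increasing) auto
  define Mp where "Mp = prot ?ns d m m"
  have lp: "locc_povm ?ns Mp" unfolding Mp_def by (rule prot_locc[OF m0 d0 dN])
  have pv: "Mp 1 = prodop ?ns (gg m d m)" "Mp 0 = (\<lambda>i j. idop ?ns i j - prodop ?ns (gg m d m) i j)"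
     "\<And>j. j \<noteq> 0 \<Longrightarrow> j \<noteq> 1 \<Longrightarrow> Mp j = zeroop"
    using prot_vals[OF m0 d0 dN, of m] unfolding Mp_def by auto
  let ?P = "prodop ?ns (\<lambda>_. Pr d)"
  have P1: "Mp 1 = ?P" using pv(1) by (simp add: gg_m[OF m0 d0 dN])
  have P0: "Mp 0 = (\<lambda>i j. idop ?ns i j - ?P i j)" using pv(2) by (simp add: gg_m[OF m0 d0 dN])
  define f where "f c = of_real (?eta c) * tr ?ns (?rho c) (Mp c)" for c
  have sum01: "(\<Sum>c<2^L. f c) = f 0 + f 1"
  proof -
    have "(\<Sum>c<2^L. f c) = (\<Sum>c\<in>{0,1}. f c)"
    proof (rule sum.mono_neutral_right)
      have "(1::nat) \<le> 2^L'" by simp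
      then have "Suc 0 < 4 * 2^L'" by linarith
      then show "{0, 1} \<subseteq> {..<(2::nat)^L}" using L by auto
      show "\<forall>c\<in>{..<2^L} - {0, 1}. f c = 0"
        using pv(3) by (auto simp: f_def zeroop_eq tr_zero2)
    qed simp
    then show ?thesis by simp
  qed
  have eta0: "?eta 0 = ens_eta m d 0 ^ L" by (simp add: seq_eta_def)
  have eta1: "?eta 1 = ens_eta m d 1 * ens_eta m d 0 ^ Suc L'"
  proof -
    have a: "(\<Prod>l<Suc L'. ens_eta m d (1 div 2 ^ Suc l mod 2)) = ens_eta m d 0 ^ Suc L'"
      by (simp only: one_div_pow) simp
    show ?thesis unfolding seq_eta_def L by (subst prod.lessThan_Suc_shift) (simp only: a, simp)
  qed
  have trI: "tr ?ns (?rho 0) (idop ?ns) = 1"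
  proof -
    have "tr ?ns (?rho 0) (idop ?ns) = (\<Sum>i\<in>idx ?ns. \<Prod>l<L. ens_rho m d 0 (map (\<lambda>a. a div d^l mod d) i) (map (\<lambda>a. a div d^l mod d) i))"
      by (simp add: tr_idop2 seq_rho_def idx_def)
    also have "\<dots> = (\<Prod>l<L. \<Sum>x\<in>idx (replicate m d). ens_rho m d 0 x x)"
      by (rule digit_sum[OF d0])
    also have "(\<Sum>x\<in>idx (replicate m d). ens_rho m d 0 x x) = 1"
      using rho1_c[OF m2 d2] by (simp add: tr_idop2)
    finally show ?thesis by simp
  qed
  let ?q = "ens_rho m d 0 (replicate m 0) (replicate m 0)"
  have rho_emb: "?rho c (emb d x) (emb d y) =
      ens_rho m d (c mod 2) x y * (ens_rho m d (c div 2 mod 2) x y *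
        (\<Prod>l<L'. ens_rho m d (c div 2 ^ Suc (Suc l) mod 2) (replicate m 0) (replicate m 0)))"
    if x: "x \<in> idx (replicate m d)" and y: "y \<in> idx (replicate m d)" for c x y
  proof -
    have v: "valid ?ns (emb d x)" "valid ?ns (emb d y)" using valid_emb[OF dN] x y by (auto simp: idx_def)
    have "?rho c (emb d x) (emb d y) = (\<Prod>l<L. ens_rho m d (c div 2 ^ l mod 2) (if l < 2 then x else replicate m 0) (if l < 2 then y else replicate m 0))"
      using v by (simp add: seq_rho_def emb_dig[OF x d0] emb_dig[OF y d0])
    also have "\<dots> = ens_rho m d (c mod 2) x y * (ens_rho m d (c div 2 mod 2) x y *
        (\<Prod>l<L'. ens_rho m d (c div 2 ^ Suc (Suc l) mod 2) (replicate m 0) (replicate m 0)))"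
      unfolding L by (simp only: prod.lessThan_Suc_shift) simp
    finally show ?thesis .
  qed
  have trP0: "tr ?ns (?rho 0) ?P = ?q ^ L' * ((1 / (2 * of_nat d ^ m))^2 * (of_nat d ^ m + of_nat d ^ m + of_nat d ^ m + (of_nat d ^ m)^2)) / of_nat d ^ m"
  proof -
    have "tr ?ns (?rho 0) ?P = (\<Sum>x\<in>idx (replicate m d). \<Sum>y\<in>idx (replicate m d). ?rho 0 (emb d x) (emb d y)) / of_nat d ^ m"
      by (rule tr_P[OF dN d0])
    also have "(\<Sum>x\<in>idx (replicate m d). \<Sum>y\<in>idx (replicate m d). ?rho 0 (emb d x) (emb d y))
       = (\<Sum>x\<in>idx (replicate m d). \<Sum>y\<in>idx (replicate m d). ?q ^ L' * (ens_rho m d 0 x y * ens_rho m d 0 x y))"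
      by (intro sum.cong refl) (simp add: rho_emb mult_ac)
    also have "\<dots> = ?q ^ L' * (\<Sum>x\<in>idx (replicate m d). \<Sum>y\<in>idx (replicate m d). ens_rho m d 0 x y * ens_rho m d 0 x y)"
      by (simp add: sum_distrib_left)
    finally show ?thesis by (simp only: S00[OF m2 d2])
  qed
  have trP1: "tr ?ns (?rho 1) ?P = ?q ^ L' * ((1 / (2 * of_nat d ^ m)) * (1 + of_nat d ^ m)) / of_nat d ^ m"
  proof -
    have "tr ?ns (?rho 1) ?P = (\<Sum>x\<in>idx (replicate m d). \<Sum>y\<in>idx (replicate m d). ?rho 1 (emb d x) (emb d y)) / of_nat d ^ m"
      by (rule tr_P[OF dN d0])
    also have "(\<Sum>x\<in>idx (replicate m d). \<Sum>y\<in>idx (replicate m d). ?rho 1 (emb d x) (emb d y))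
       = (\<Sum>x\<in>idx (replicate m d). \<Sum>y\<in>idx (replicate m d). ?q ^ L' * (GHZ m d x y * ens_rho m d 0 x y))"
    proof (intro sum.cong refl)
      fix x y assume x: "x \<in> idx (replicate m d)" and y: "y \<in> idx (replicate m d)"
      have pq: "(\<Prod>l<L'. ens_rho m d (1 div 2 ^ Suc (Suc l) mod 2) (replicate m 0) (replicate m 0)) = ?q ^ L'"
        by (simp only: one_div_pow) simp
      have er1: "ens_rho m d (Suc 0) = GHZ m d" by (simp add: ens_rho_def)
      have "?rho 1 (emb d x) (emb d y) = ens_rho m d (1 mod 2) x y * (ens_rho m d (1 div 2 mod 2) x y * ?q ^ L')"
        by (simp only: rho_emb[OF x y] pq)
      then show "?rho 1 (emb d x) (emb d y) = ?q ^ L' * (GHZ m d x y * ens_rho m d 0 x y)"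
        by (simp add: er1 mult_ac)
    qed
    also have "\<dots> = ?q ^ L' * (\<Sum>x\<in>idx (replicate m d). \<Sum>y\<in>idx (replicate m d). GHZ m d x y * ens_rho m d 0 x y)"
      by (simp add: sum_distrib_left)
    finally show ?thesis by (simp only: S10[OF m2 d2])
  qed
  define P where "P = real d ^ m"
  define dd where "dd = real d"
  define c0 where "c0 = 1 / (2 * P)"
  define qr where "qr = c0 * (1 + P / dd)"
  define T0 where "T0 = qr ^ L' * (c0^2 * (P + P + P + P^2)) / P"
  define T1 where "T1 = qr ^ L' * (c0 * (1 + P)) / P"
  have hq: "of_real qr = ?q" unfolding qr_def c0_def P_def dd_def using q_val[OF m2 d2] by simp
  have hP: "of_real P = (of_nat d ^ m :: complex)" unfolding P_def by simp
  have hc: "of_real c0 = 1 / (2 * (of_nat d ^ m :: complex))" unfolding c0_def P_def by simp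
  have t0: "tr ?ns (?rho 0) ?P = of_real T0"
    unfolding trP0 T0_def by (simp only: of_real_mult of_real_divide of_real_power of_real_add hq hP hc)
  have t1: "tr ?ns (?rho 1) ?P = of_real T1"
    unfolding trP1 T1_def by (simp only: of_real_mult of_real_divide of_real_power of_real_add of_real_1 hq hP hc)
  define V where "V = Re (\<Sum>c<2^L. of_real (?eta c) * tr ?ns (?rho c) (Mp c))"
  have V: "V = ens_eta m d 0 ^ L * (1 - T0) + (ens_eta m d 1 * ens_eta m d 0 ^ Suc L') * T1"
  proof -
    have "V = Re (f 0 + f 1)" unfolding V_def using sum01 by (simp add: f_def)
    also have "f 0 = of_real (ens_eta m d 0 ^ L) * (1 - of_real T0)"
      unfolding f_def eta0 P0 tr_diff2 trI t0 ..
    also have "f 1 = of_real (ens_eta m d 1 * ens_eta m d 0 ^ Suc L') * of_real T1"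
      unfolding f_def eta1 P1 t1 ..
    finally show ?thesis by simp
  qed
  have e0: "ens_eta m d 0 = 2*P/(dd+3*P)" "ens_eta m d 1 = (dd+P)/(dd+3*P)"
    by (simp_all add: ens_eta_def P_def dd_def)
  have ineq: "ens_eta m d 0 ^ L < V"
    unfolding V e0 T0_def T1_def qr_def c0_def L
    by (rule fin_ineq) (use d2 d0 in \<open>simp_all add: dd_def P_def\<close>)
  have Vin: "V \<in> {Re (\<Sum>j<2^L. of_real (?eta j) * tr ?ns (?rho j) (M j)) | M. locc_povm ?ns M}"
    unfolding V_def using lp by blast
  have bdd: "bdd_above {Re (\<Sum>j<2^L. of_real (?eta j) * tr ?ns (?rho j) (M j)) | M. locc_povm ?ns M}"
    unfolding bdd_above_def using val_bound by blast
  have "V \<le> pL ?ns (2^L) ?eta ?rho"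
    unfolding pL_def by (rule cSup_upper[OF Vin bdd])
  then show ?thesis using ineq by simp
qed


theorem mainTheorem7:
  fixes m d L :: nat
  assumes "m \<ge> 2" and "d \<ge> 2" and "L \<ge> 2"
  shows "(\<Prod>l<L. pL (replicate m d) 2 (ens_eta m d) (ens_rho m d)) = ens_eta m d 0 ^ L
       \<and> ens_eta m d 0 ^ L <
           pL (replicate m (d ^ L)) (2 ^ L)
              (seq_eta 2 L (\<lambda>l. ens_eta m d)) (seq_rho m d 2 L (\<lambda>l. ens_rho m d))
       \<and> \<not> block_positive (replicate m (d ^ 2)) (witness_op m d)"
proof -
  have p1: "(\<Prod>l<L. pL (replicate m d) 2 (ens_eta m d) (ens_rho m d)) = ens_eta m d 0 ^ L"
    by (simp add: pL_single[OF assms(1) assms(2)])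
  show ?thesis using p1 part2[OF assms] witness_not_bp[OF assms(1) assms(2)] by blast
qed

end
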